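(* There is an algorithm which, given a permutation $\pi$ of $\{1,\dots,n\}$, outputs a maximum induced matching of the permutation graph $G(\pi)$ in $\mathcal{O}(n^2)$ time.
   Context: For a permutation $\pi=(\pi(1),\dots,\pi(n))$ of $\{1,\dots,n\}$, $\pi^{-1}(i)$ denotes the position of $i$ in $\pi$. The permutation graph $G(\pi)=(V,E)$ has $V=\{1,\dots,n\}$ and $uv\in E$ iff $(u-v)(\pi^{-1}(u)-\pi^{-1}(v))<0$. An induced matching of a graph $G=(V,E)$ is a set $M\subseteq E$ such that for any two distinct edges $u_1v_1,u_2v_2\in M$, none of $u_1u_2,u_1v_2,v_1u_2,v_1v_2$ is in $E$. A maximum induced matching is one of maximum cardinality. Running times are in the standard RAM model. *)

theory Defs
  imports "HOL-Combinatorics.Permutations"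
begin

text \<open>A permutation of {1..n} is a function pi :: nat => nat with pi permutes {1..n};
  pi i is the entry at position i and inv pi v is the position of v.
  Edges of a graph are doubleton sets {u,v}.\<close>

definition perm_graph_edges :: "nat \<Rightarrow> (nat \<Rightarrow> nat) \<Rightarrow> nat set set" where
  "perm_graph_edges n \<pi> =
     {{u, v} | u v. u \<in> {1..n} \<and> v \<in> {1..n} \<and>
        (int u - int v) * (int (inv \<pi> u) - int (inv \<pi> v)) < 0}"

definition induced_matching :: "nat set set \<Rightarrow> nat set set \<Rightarrow> bool" where
  "induced_matching E M \<longleftrightarrow> M \<subseteq> E \<and>
     (\<forall>u1 v1 u2 v2. {u1, v1} \<in> M \<and> {u2, v2} \<in> M \<and> {u1, v1} \<noteq> {u2, v2} \<longrightarrow>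
        {u1, u2} \<notin> E \<and> {u1, v2} \<notin> E \<and> {v1, u2} \<notin> E \<and> {v1, v2} \<notin> E)"

definition maximum_induced_matching :: "nat set set \<Rightarrow> nat set set \<Rightarrow> bool" where
  "maximum_induced_matching E M \<longleftrightarrow> induced_matching E M \<and>
     (\<forall>M'. induced_matching E M' \<longrightarrow> card M' \<le> card M)"

datatype instr =
    LoadC int int
  | Copy int int
  | Add int int int
  | Sub int int int
  | LoadI int int
  | StoreI int int
  | Jle int int nat
  | Halt

type_synonym config = "nat \<times> (int \<Rightarrow> int)"

definition halted :: "instr list \<Rightarrow> config \<Rightarrow> bool" where
  "halted P cf \<longleftrightarrow> fst cf \<ge> length P \<or> P ! fst cf = Halt"

fun exec :: "instr \<Rightarrow> config \<Rightarrow> config" where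
  "exec (LoadC a c) (pc, m) = (Suc pc, m(a := c))"
| "exec (Copy a b) (pc, m) = (Suc pc, m(a := m b))"
| "exec (Add a b c) (pc, m) = (Suc pc, m(a := m b + m c))"
| "exec (Sub a b c) (pc, m) = (Suc pc, m(a := m b - m c))"
| "exec (LoadI a b) (pc, m) = (Suc pc, m(a := m (m b)))"
| "exec (StoreI a b) (pc, m) = (Suc pc, m(m a := m b))"
| "exec (Jle a b t) (pc, m) = (if m a \<le> m b then t else Suc pc, m)"
| "exec Halt (pc, m) = (pc, m)"

definition step :: "instr list \<Rightarrow> config \<Rightarrow> config" where
  "step P cf = (if halted P cf then cf else exec (P ! fst cf) cf)"

definition run :: "instr list \<Rightarrow> nat \<Rightarrow> config \<Rightarrow> config" where
  "run P k cf = (step P ^^ k) cf"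

definition input_mem :: "nat \<Rightarrow> (nat \<Rightarrow> nat) \<Rightarrow> int \<Rightarrow> int" where
  "input_mem n \<pi> = (\<lambda>a. if a = 0 then int n
                         else if 1 \<le> a \<and> a \<le> int n then int (\<pi> (nat a)) else 0)"

definition output_edges :: "(int \<Rightarrow> int) \<Rightarrow> nat set set" where
  "output_edges m = {{nat (m (2 * j - 1)), nat (m (2 * j))} | j. 1 \<le> j \<and> j \<le> m 0}"

end

theory Submission
  imports Defs
begin


fun Ft :: "(nat\<Rightarrow>nat) \<Rightarrow> (nat\<Rightarrow>nat) \<Rightarrow> nat \<Rightarrow> nat \<Rightarrow> nat" where
  "Ft p s 0 y = 0"
| "Ft p s (Suc x) 0 = 0"
| "Ft p s (Suc x) (Suc y) = max (max (Ft p s x (Suc y)) (Ft p s (Suc x) y))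
     (if s (Suc y) < Suc x \<and> p (Suc x) < Suc y then Suc (Ft p s (s (Suc y) - 1) (p (Suc x) - 1)) else 0)"

lemma Ft_rec: "x \<ge> 1 \<Longrightarrow> y \<ge> 1 \<Longrightarrow> Ft p s x y = max (max (Ft p s (x-1) y) (Ft p s x (y-1)))
     (if s y < x \<and> p x < y then Suc (Ft p s (s y - 1) (p x - 1)) else 0)"
  by (cases x; cases y) auto

lemma Ft_0[simp]: "Ft p s x 0 = 0"
  by (cases x) auto

function Tr :: "(nat\<Rightarrow>nat) \<Rightarrow> (nat\<Rightarrow>nat) \<Rightarrow> nat \<Rightarrow> nat \<Rightarrow> (nat \<times> nat) list" where
  "Tr p s x y = (if x = 0 \<or> y = 0 then [] else
     if Ft p s x y \<le> Ft p s (x-1) y then Tr p s (x-1) y else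
     if Ft p s x y \<le> Ft p s x (y-1) then Tr p s x (y-1) else
     if s y < x \<and> p x < y then (y, p x) # Tr p s (s y - 1) (p x - 1) else [])"
  by pat_completeness auto
termination by (relation "measure (\<lambda>(p,s,x,y). x+y)") auto

declare Tr.simps[simp del]

lemma Ft_mono1: "Ft p s x y \<le> Ft p s (Suc x) y"
  by (cases y) auto
lemma Ft_mono2: "Ft p s x y \<le> Ft p s x (Suc y)"
  by (cases x) auto
lemma Ft_mono: "x \<le> x' \<Longrightarrow> y \<le> y' \<Longrightarrow> Ft p s x y \<le> Ft p s x' y'"
proof -
  assume a: "x \<le> x'" "y \<le> y'"
  have "Ft p s x y \<le> Ft p s x' y" using a(1)
    by (induction rule: dec_induct) (auto intro: order_trans[OF _ Ft_mono1])
  also have "\<dots> \<le> Ft p s x' y'" using a(2)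
    by (induction rule: dec_induct) (auto intro: order_trans[OF _ Ft_mono2])
  finally show ?thesis .
qed

lemma Ft_half: "\<forall>v. v \<ge> 1 \<longrightarrow> s v \<ge> 1 \<Longrightarrow> 2 * Ft p s x y \<le> x"
proof (induction p s x y rule: Ft.induct)
  case (3 p s x y)
  have a: "2 * Ft p s x (Suc y) \<le> Suc x" using 3 by auto
  have b: "2 * Ft p s (Suc x) y \<le> Suc x" using 3 by auto
  have c: "2 * (if s (Suc y) < Suc x \<and> p (Suc x) < Suc y then Suc (Ft p s (s (Suc y) - 1) (p (Suc x) - 1)) else 0) \<le> Suc x"
  proof (cases "s (Suc y) < Suc x \<and> p (Suc x) < Suc y")
    case True
    then have "s (Suc y) \<ge> 1" using 3 by auto
    moreover have "2 * Ft p s (s (Suc y) - 1) (p (Suc x) - 1) \<le> s (Suc y) - 1" using True 3 by auto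
    moreover have "s (Suc y) < Suc x" using True by simp
    ultimately have "2 * Suc (Ft p s (s (Suc y) - 1) (p (Suc x) - 1)) \<le> Suc x" by (simp only: mult_Suc_right; linarith)
    then show ?thesis using True by simp
  qed auto
  show ?case unfolding Ft.simps using a b c by (simp add: max_def)
qed auto

lemma Ft_top: "1\<le>x \<Longrightarrow> 1\<le>y \<Longrightarrow> \<not> Ft p s x y \<le> Ft p s (x-1) y \<Longrightarrow> \<not> Ft p s x y \<le> Ft p s x (y-1)
  \<Longrightarrow> s y < x \<and> p x < y \<and> Ft p s x y = Suc (Ft p s (s y - 1) (p x - 1))"
  using Ft_rec[of x y p s] by (auto simp: max_def split: if_splits)

lemma Ft_box: "1\<le>x \<Longrightarrow> 1\<le>y \<Longrightarrow> s y < x \<Longrightarrow> p x < y \<Longrightarrow> Suc (Ft p s (s y - 1) (p x - 1)) \<le> Ft p s x y"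
  using Ft_rec[of x y p s] by auto

lemma Tr_len: "length (Tr p s x y) = Ft p s x y"
proof (induction p s x y rule: Tr.induct)
  case (1 p s x y)
  show ?case
  proof (cases "x = 0 \<or> y = 0")
    case True then show ?thesis by (auto simp: Tr.simps)
  next
    case nz: False
    show ?thesis
    proof (cases "Ft p s x y \<le> Ft p s (x-1) y")
      case True
      moreover have "Ft p s (x-1) y \<le> Ft p s x y" by (rule Ft_mono) auto
      ultimately show ?thesis using 1 nz by (simp add: Tr.simps[of p s x y])
    next
      case c1: False
      show ?thesis
      proof (cases "Ft p s x y \<le> Ft p s x (y-1)")
        case True
        moreover have "Ft p s x (y-1) \<le> Ft p s x y" by (rule Ft_mono) auto
        ultimately show ?thesis using 1 nz c1 by (simp add: Tr.simps[of p s x y])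
      next
        case c2: False
        have t: "s y < x \<and> p x < y \<and> Ft p s x y = Suc (Ft p s (s y - 1) (p x - 1))"
          using Ft_top[of x y p s] nz c1 c2 by auto
        then show ?thesis using 1 nz c1 c2 by (simp add: Tr.simps[of p s x y])
      qed
    qed
  qed
qed

definition Rel :: "(nat\<Rightarrow>nat) \<Rightarrow> nat \<times> nat \<Rightarrow> nat \<times> nat \<Rightarrow> bool" where
  "Rel s e1 e2 \<longleftrightarrow> s (snd e2) < s (fst e1) \<and> fst e2 < snd e1"

lemma Tr_set: "e \<in> set (Tr p s x y) \<Longrightarrow> \<exists>a b. e = (b, p a) \<and> 1 \<le> a \<and> a \<le> x \<and> 1 \<le> b \<and> b \<le> y \<and> s b < a \<and> p a < b"
proof (induction p s x y arbitrary: e rule: Tr.induct)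
  case (1 p s x y)
  show ?case
  proof (cases "x = 0 \<or> y = 0")
    case True then show ?thesis using 1(4) by (auto simp: Tr.simps)
  next
    case nz: False
    show ?thesis
    proof (cases "Ft p s x y \<le> Ft p s (x-1) y")
      case True
      then have "e \<in> set (Tr p s (x-1) y)" using 1(4) nz by (simp add: Tr.simps[of p s x y])
      from 1(1)[OF nz True this] obtain a b where "e = (b, p a) \<and> 1 \<le> a \<and> a \<le> x-1 \<and> 1 \<le> b \<and> b \<le> y \<and> s b < a \<and> p a < b" by blast
      then show ?thesis by (intro exI[of _ a] exI[of _ b]) auto
    next
      case c1: False
      show ?thesis
      proof (cases "Ft p s x y \<le> Ft p s x (y-1)")
        case True
        then have "e \<in> set (Tr p s x (y-1))" using 1(4) nz c1 by (simp add: Tr.simps[of p s x y])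
        from 1(2)[OF nz c1 True this] obtain a b where "e = (b, p a) \<and> 1 \<le> a \<and> a \<le> x \<and> 1 \<le> b \<and> b \<le> y-1 \<and> s b < a \<and> p a < b" by blast
        then show ?thesis by (intro exI[of _ a] exI[of _ b]) auto
      next
        case c2: False
        have t: "s y < x \<and> p x < y"
          using Ft_top[of x y p s] nz c1 c2 by auto
        have d: "e = (y, p x) \<or> e \<in> set (Tr p s (s y - 1) (p x - 1))" using t 1(4) nz c1 c2 by (simp add: Tr.simps[of p s x y])
        have i1: "e = (y, p x) \<Longrightarrow> ?thesis" using t nz by auto
        have i2: "e \<in> set (Tr p s (s y - 1) (p x - 1)) \<Longrightarrow> ?thesis"
        proof -
          assume h: "e \<in> set (Tr p s (s y - 1) (p x - 1))"
          from 1(3)[OF nz c1 c2 t h] obtain a b where "e = (b, p a) \<and> 1 \<le> a \<and> a \<le> s y - 1 \<and> 1 \<le> b \<and> b \<le> p x - 1 \<and> s b < a \<and> p a < b" by blast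
          then show ?thesis using t by (intro exI[of _ a] exI[of _ b]) auto
        qed
        show ?thesis using d i1 i2 by blast
      qed
    qed
  qed
qed

lemma Tr_sorted: "(\<forall>a. s (p a) = a) \<Longrightarrow> sorted_wrt (Rel s) (Tr p s x y)"
proof (induction p s x y rule: Tr.induct)
  case (1 p s x y)
  show ?case
  proof (cases "x = 0 \<or> y = 0")
    case True then show ?thesis by (auto simp: Tr.simps)
  next
    case nz: False
    show ?thesis
    proof (cases "Ft p s x y \<le> Ft p s (x-1) y")
      case True
      then show ?thesis using 1(1)[OF nz True 1(4)] nz by (simp add: Tr.simps[of p s x y])
    next
      case c1: False
      show ?thesis
      proof (cases "Ft p s x y \<le> Ft p s x (y-1)")
        case True
        then show ?thesis using 1(2)[OF nz c1 True 1(4)] nz c1 by (simp add: Tr.simps[of p s x y])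
      next
        case c2: False
        have t: "s y < x \<and> p x < y"
          using Ft_top[of x y p s] nz c1 c2 by auto
        have "\<forall>e \<in> set (Tr p s (s y - 1) (p x - 1)). Rel s (y, p x) e"
        proof
          fix e assume "e \<in> set (Tr p s (s y - 1) (p x - 1))"
          from Tr_set[OF this] obtain a b where "e = (b, p a)" "1 \<le> a" "a \<le> s y - 1" "1 \<le> b" "b \<le> p x - 1" by blast
          then show "Rel s (y, p x) e" using 1(4) unfolding Rel_def by auto
        qed
        then show ?thesis using 1(3)[OF nz c1 c2 t 1(4)] t nz c1 c2 by (simp add: Tr.simps[of p s x y])
      qed
    qed
  qed
qed

lemma key_arith:
  fixes a b c d sa sb sc sd :: nat
  assumes "b<a" "sa<sb" "d<c" "sc<sd" "sd \<le> sb"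
   "\<not>((a<c \<and> sc<sa) \<or> (c<a \<and> sa<sc))"
   "\<not>((a<d \<and> sd<sa) \<or> (d<a \<and> sa<sd))"
   "\<not>((b<c \<and> sc<sb) \<or> (c<b \<and> sb<sc))"
   "\<not>((b<d \<and> sd<sb) \<or> (d<b \<and> sb<sd))"
   "a = c \<longleftrightarrow> sa = sc" "a = d \<longleftrightarrow> sa = sd" "b = c \<longleftrightarrow> sb = sc" "b = d \<longleftrightarrow> sb = sd"
   "\<not> (c = a \<and> d = b)"
  shows "c < b \<and> d < b \<and> sc < sa \<and> sd < sa"
proof -
  have "d \<noteq> b"
  proof
    assume "d = b"
    then show False using assms(1,2,7,13) by auto
  qed
  then have "sd \<noteq> sb" using assms(13) by blast
  then have sdb: "sd < sb" using assms(5) by simp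
  then have db: "d < b" using assms(9) \<open>d \<noteq> b\<close> by (meson linorder_neqE_nat)
  then have "d < a" using assms(1) by simp
  then have "\<not> sa < sd" using assms(7) by blast
  moreover have "sa \<noteq> sd" using assms(11) \<open>d < a\<close> by simp
  ultimately have sda: "sd < sa" by simp
  have "c \<noteq> b" using assms(12) assms(4) sdb by auto
  have "\<not> b < c"
  proof
    assume "b < c" then have "\<not> sc < sb" using assms(8) by blast
    then show False using assms(4) sdb by simp
  qed
  then have cb: "c < b" using \<open>c \<noteq> b\<close> by simp
  then have "c < a" using assms(1) by simp
  then have "\<not> sa < sc" using assms(6) by blast
  moreover have "sa \<noteq> sc" using assms(10) \<open>c < a\<close> by simp
  ultimately have sca: "sc < sa" by simp
  show ?thesis using cb db sca sda by simp
qed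

locale pg =
  fixes n :: nat and p :: "nat \<Rightarrow> nat"
  assumes perm: "p permutes {1..n}"
begin

abbreviation "s \<equiv> inv p"
abbreviation "F \<equiv> Ft p s"
abbreviation "T \<equiv> Tr p s"
abbreviation "E \<equiv> perm_graph_edges n p"

lemma sp[simp]: "s (p x) = x" using permutes_inverses(2)[OF perm] by simp
lemma ps[simp]: "p (s x) = x" using permutes_inverses(1)[OF perm] by simp
lemma pr: "x \<in> {1..n} \<Longrightarrow> p x \<in> {1..n}" using permutes_in_image[OF perm] by simp
lemma sr: "x \<in> {1..n} \<Longrightarrow> s x \<in> {1..n}" using permutes_in_image[OF permutes_inv[OF perm]] by simp
lemma pout: "x \<notin> {1..n} \<Longrightarrow> p x = x" using permutes_not_in[OF perm] by simp
lemma sout: "x \<notin> {1..n} \<Longrightarrow> s x = x" using permutes_not_in[OF permutes_inv[OF perm]] by simp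
lemma p1: "x \<ge> 1 \<Longrightarrow> p x \<ge> 1" using pr pout by (cases "x \<in> {1..n}") auto
lemma s1: "x \<ge> 1 \<Longrightarrow> s x \<ge> 1" using sr sout by (cases "x \<in> {1..n}") auto
lemma pinj: "p x = p y \<longleftrightarrow> x = y" by (metis sp)
lemma sinj: "s x = s y \<longleftrightarrow> x = y" by (metis ps)

lemma E_iff: "{a,b} \<in> E \<longleftrightarrow> a \<in> {1..n} \<and> b \<in> {1..n} \<and> (int a - int b) * (int (s a) - int (s b)) < 0"
proof
  assume "{a,b} \<in> E"
  then obtain u v where "{a,b} = {u,v}" "u \<in> {1..n}" "v \<in> {1..n}" "(int u - int v) * (int (s u) - int (s v)) < 0"
    unfolding perm_graph_edges_def by blast
  then show "a \<in> {1..n} \<and> b \<in> {1..n} \<and> (int a - int b) * (int (s a) - int (s b)) < 0"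
    by (auto simp: doubleton_eq_iff algebra_simps)
next
  assume "a \<in> {1..n} \<and> b \<in> {1..n} \<and> (int a - int b) * (int (s a) - int (s b)) < 0"
  then show "{a,b} \<in> E" unfolding perm_graph_edges_def by blast
qed

lemma E_iff2: "{a,b} \<in> E \<longleftrightarrow> a \<in> {1..n} \<and> b \<in> {1..n} \<and> ((a < b \<and> s b < s a) \<or> (b < a \<and> s a < s b))"
  unfolding E_iff
  by (smt (verit, ccfv_threshold) mult_le_0_iff mult_less_0_iff of_nat_less_iff)

lemma E_elem: "e \<in> E \<Longrightarrow> \<exists>a b. e = {a,b} \<and> a \<in> {1..n} \<and> b \<in> {1..n} \<and> b < a \<and> s a < s b"
proof -
  assume "e \<in> E"
  then obtain u v where e: "e = {u,v}" unfolding perm_graph_edges_def by blast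
  with \<open>e \<in> E\<close> E_iff2 show ?thesis by (metis insert_commute)
qed

lemma E_finite: "finite E"
proof -
  have "E \<subseteq> Pow {1..n}" unfolding perm_graph_edges_def by auto
  then show ?thesis by (rule finite_subset) auto
qed

lemma im_subset: "induced_matching E' M \<Longrightarrow> M' \<subseteq> M \<Longrightarrow> induced_matching E' M'"
  unfolding induced_matching_def by blast

lemma UB: "finite M \<Longrightarrow> induced_matching E M \<Longrightarrow> (\<forall>e\<in>M. \<forall>v\<in>e. v \<le> Y \<and> s v \<le> X) \<Longrightarrow> card M \<le> F X Y"
proof (induction "card M" arbitrary: M X Y rule: less_induct)
  case less
  show ?case
  proof (cases "M = {}")
    case True then show ?thesis by simp
  next
    case ne: False
    define xc where "xc e = Max (s ` e)" for e :: "nat set"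
    have "Max (xc ` M) \<in> xc ` M" using less.prems(1) ne by (intro Max_in) auto
    then obtain e where eM: "e \<in> M" and "xc e = Max (xc ` M)" by auto
    then have emax: "\<forall>e'\<in>M. xc e' \<le> xc e" using less.prems(1) by auto
    have ME: "M \<subseteq> E" using less.prems(2) unfolding induced_matching_def by auto
    obtain a b where e: "e = {a,b}" "a \<in> {1..n}" "b\<in>{1..n}" "b<a" "s a < s b"
      using E_elem eM ME by blast
    have xce: "xc e = s b" unfolding xc_def e(1) using e(5) by simp
    have sub: "\<forall>e'\<in>M-{e}. \<forall>v\<in>e'. v \<le> b - 1 \<and> s v \<le> s a - 1"
    proof (intro ballI)
      fix e' v assume e'M: "e' \<in> M - {e}" and v: "v \<in> e'"
      obtain c d where e': "e' = {c,d}" "c \<in> {1..n}" "d\<in>{1..n}" "d<c" "s c < s d"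
        using E_elem e'M ME by blast
      have xce': "xc e' = s d" unfolding xc_def e'(1) using e'(5) by simp
      have sd: "s d \<le> s b" using emax e'M xce xce' by auto
      have ne': "{a,b} \<noteq> {c,d}" using e'M e e' by auto
      have all: "\<forall>u1 v1 u2 v2. {u1, v1} \<in> M \<and> {u2, v2} \<in> M \<and> {u1, v1} \<noteq> {u2, v2} \<longrightarrow>
        {u1, u2} \<notin> E \<and> {u1, v2} \<notin> E \<and> {v1, u2} \<notin> E \<and> {v1, v2} \<notin> E"
        using less.prems(2) unfolding induced_matching_def by (rule conjunct2)
      have abM: "{a,b} \<in> M" "{c,d} \<in> M" using eM e'M e(1) e'(1) by auto
      have im: "{a, c} \<notin> E \<and> {a, d} \<notin> E \<and> {b, c} \<notin> E \<and> {b, d} \<notin> E"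
        using all[rule_format, of a b c d] abM ne' by blast
      have "c < b \<and> d < b \<and> s c < s a \<and> s d < s a"
      proof (rule key_arith[of b a "s a" "s b" d c "s c" "s d"])
        show "\<not>((a<c \<and> s c<s a) \<or> (c<a \<and> s a<s c))" using im E_iff2[of a c] e(2) e'(2) by blast
        show "\<not>((a<d \<and> s d<s a) \<or> (d<a \<and> s a<s d))" using im E_iff2[of a d] e(2) e'(3) by blast
        show "\<not>((b<c \<and> s c<s b) \<or> (c<b \<and> s b<s c))" using im E_iff2[of b c] e(3) e'(2) by blast
        show "\<not>((b<d \<and> s d<s b) \<or> (d<b \<and> s b<s d))" using im E_iff2[of b d] e(3) e'(3) by blast
        show "\<not> (c = a \<and> d = b)" using ne' by blast
      qed (simp_all add: e(4,5) e'(4,5) sd sinj)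
      then show "v \<le> b - 1 \<and> s v \<le> s a - 1" using v e' by auto
    qed
    have fin': "finite (M - {e})" using less.prems(1) by auto
    have cardM: "card M = Suc (card (M - {e}))"
      by (rule sym, rule card_Suc_Diff1[OF less.prems(1) eM])
    have "card (M - {e}) \<le> F (s a - 1) (b - 1)"
      using less.hyps[of "M - {e}"] cardM fin' im_subset[OF less.prems(2)] sub by auto
    moreover have "Suc (F (s a - 1) (p (s b) - 1)) \<le> F (s b) a"
      using Ft_box[where x="s b" and y=a and p=p and s=s] e s1 by auto
    moreover have "F (s b) a \<le> F X Y"
      using less.prems(3) eM e by (intro Ft_mono) auto
    ultimately show ?thesis using cardM by simp
  qed
qed

definition Mout where "Mout = (\<lambda>(a,b). {a,b}) ` set (T n n)"

lemma T_props: "e \<in> set (T n n) \<Longrightarrow> \<exists>a b. e = (b, p a) \<and> 1 \<le> a \<and> a \<le> n \<and> 1 \<le> b \<and> b \<le> n \<and> s b < a \<and> p a < b"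
  by (rule Tr_set)

lemma T_sorted: "sorted_wrt (Rel s) (T n n)"
  by (rule Tr_sorted) simp

lemma T_rel: "e1 \<in> set (T n n) \<Longrightarrow> e2 \<in> set (T n n) \<Longrightarrow> e1 \<noteq> e2 \<Longrightarrow> Rel s e1 e2 \<or> Rel s e2 e1"
proof -
  assume a: "e1 \<in> set (T n n)" "e2 \<in> set (T n n)" "e1 \<noteq> e2"
  obtain i where i: "i < length (T n n)" "e1 = T n n ! i" using a(1) by (auto simp: in_set_conv_nth)
  obtain j where j: "j < length (T n n)" "e2 = T n n ! j" using a(2) by (auto simp: in_set_conv_nth)
  have st: "\<forall>i j. i < j \<longrightarrow> j < length (T n n) \<longrightarrow> Rel s (T n n ! i) (T n n ! j)"
    using T_sorted unfolding sorted_wrt_iff_nth_less by blast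
  have "i \<noteq> j" using a(3) i j by auto
  then have "i < j \<or> j < i" by arith
  then show ?thesis using st i j by blast
qed

lemma Rel_noedge:
  assumes "e1 \<in> set (T n n)" "e2 \<in> set (T n n)" "Rel s e1 e2" "u \<in> {fst e1, snd e1}" "v \<in> {fst e2, snd e2}"
  shows "{u, v} \<notin> E"
proof -
  obtain a1 b1 where 1: "e1 = (b1, p a1)" "1 \<le> a1" "a1 \<le> n" "1 \<le> b1" "b1 \<le> n" "s b1 < a1" "p a1 < b1"
    using T_props[OF assms(1)] by blast
  obtain a2 b2 where 2: "e2 = (b2, p a2)" "1 \<le> a2" "a2 \<le> n" "1 \<le> b2" "b2 \<le> n" "s b2 < a2" "p a2 < b2"
    using T_props[OF assms(2)] by blast
  have r: "a2 < s b1" "b2 < p a1" using assms(3) 1 2 unfolding Rel_def by auto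
  have "v < u \<and> s v < s u" using assms(4,5) 1 2 r by auto
  then show ?thesis unfolding E_iff2 by auto
qed

lemma T_elem_E: "e \<in> set (T n n) \<Longrightarrow> {fst e, snd e} \<in> E \<and> snd e < fst e"
proof -
  assume "e \<in> set (T n n)"
  from T_props[OF this] obtain a b where 1: "e = (b, p a)" "1 \<le> a" "a \<le> n" "1 \<le> b" "b \<le> n" "s b < a" "p a < b" by blast
  have "p a \<in> {1..n}" using pr 1 by auto
  then show ?thesis unfolding E_iff2 using 1 by auto
qed

lemma Mout_im: "induced_matching E Mout"
  unfolding induced_matching_def
proof (rule conjI)
  show "Mout \<subseteq> E" unfolding Mout_def using T_elem_E by auto
next
  show "\<forall>u1 v1 u2 v2. {u1, v1} \<in> Mout \<and> {u2, v2} \<in> Mout \<and> {u1, v1} \<noteq> {u2, v2} \<longrightarrow>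
        {u1, u2} \<notin> E \<and> {u1, v2} \<notin> E \<and> {v1, u2} \<notin> E \<and> {v1, v2} \<notin> E"
  proof (intro allI impI)
  fix u1 v1 u2 v2 assume h: "{u1, v1} \<in> Mout \<and> {u2, v2} \<in> Mout \<and> {u1, v1} \<noteq> {u2, v2}"
  obtain e1 where e1: "e1 \<in> set (T n n)" "{u1,v1} = {fst e1, snd e1}"
    using h unfolding Mout_def by (force simp: case_prod_beta)
  obtain e2 where e2: "e2 \<in> set (T n n)" "{u2,v2} = {fst e2, snd e2}"
    using h unfolding Mout_def by (force simp: case_prod_beta)
  note e = e1(1) e2(1) e1(2) e2(2)
  then have "e1 \<noteq> e2" using h by auto
  then have "Rel s e1 e2 \<or> Rel s e2 e1" using T_rel e by auto
  then show "{u1, u2} \<notin> E \<and> {u1, v2} \<notin> E \<and> {v1, u2} \<notin> E \<and> {v1, v2} \<notin> E"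
  proof
    assume "Rel s e1 e2"
    then have "\<And>u v. u \<in> {u1, v1} \<Longrightarrow> v \<in> {u2, v2} \<Longrightarrow> {u, v} \<notin> E"
      using Rel_noedge[OF e(1,2)] e(3,4) by simp
    then show ?thesis by simp
  next
    assume "Rel s e2 e1"
    then have H: "\<And>u v. u \<in> {u1, v1} \<Longrightarrow> v \<in> {u2, v2} \<Longrightarrow> {v, u} \<notin> E"
      using Rel_noedge[OF e(2,1)] e(3,4) by simp
    have "{u2,u1} \<notin> E" "{v2,u1} \<notin> E" "{u2,v1} \<notin> E" "{v2,v1} \<notin> E" using H by auto
    then show ?thesis by (simp add: insert_commute)
  qed
qed
qed

lemma Mout_card: "card Mout = F n n"
proof -
  have irr: "\<not> Rel s e e" if "e \<in> set (T n n)" for e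
    using T_elem_E[OF that] unfolding Rel_def by auto
  have dist: "distinct (T n n)"
    unfolding distinct_conv_nth
  proof (intro allI impI)
    fix i j assume ij: "i < length (T n n)" "j < length (T n n)" "i \<noteq> j"
    have st: "\<forall>i j. i < j \<longrightarrow> j < length (T n n) \<longrightarrow> Rel s (T n n ! i) (T n n ! j)"
      using T_sorted unfolding sorted_wrt_iff_nth_less by blast
    show "T n n ! i \<noteq> T n n ! j"
    proof
      assume eq: "T n n ! i = T n n ! j"
      have "i < j \<or> j < i" using ij by arith
      then have "Rel s (T n n ! i) (T n n ! i)" using st ij eq by metis
      then show False using irr ij(1) nth_mem by blast
    qed
  qed
  have inj: "inj_on (\<lambda>(a,b). {a,b}) (set (T n n))"
  proof (rule inj_onI)
    fix e1 e2 assume a: "e1 \<in> set (T n n)" "e2 \<in> set (T n n)" "(\<lambda>(a,b). {a::nat,b}) e1 = (\<lambda>(a,b). {a,b}) e2"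
    show "e1 = e2"
    proof (rule ccontr)
      assume "e1 \<noteq> e2"
      then have "Rel s e1 e2 \<or> Rel s e2 e1" using T_rel a by auto
      moreover have "{fst e1, snd e1} = {fst e2, snd e2}" using a(3) by (cases e1; cases e2) auto
      ultimately show False using T_elem_E[OF a(1)] T_elem_E[OF a(2)] unfolding Rel_def
        by (auto simp: doubleton_eq_iff)
    qed
  qed
  have "card Mout = card (set (T n n))" unfolding Mout_def using inj by (rule card_image)
  also have "\<dots> = length (T n n)" using dist by (rule distinct_card)
  finally show ?thesis using Tr_len by simp
qed

lemma Mout_max: "maximum_induced_matching E Mout"
  unfolding maximum_induced_matching_def
proof (intro conjI allI impI)
  show "induced_matching E Mout" by (rule Mout_im)
next
  fix M' assume im: "induced_matching E M'"
  then have ME: "M' \<subseteq> E" unfolding induced_matching_def by auto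
  then have fin: "finite M'" using E_finite finite_subset by auto
  have "\<forall>e\<in>M'. \<forall>v\<in>e. v \<le> n \<and> s v \<le> n"
  proof (intro ballI)
    fix e v assume "e \<in> M'" "v \<in> e"
    then obtain a b where "e = {a,b}" "a \<in> {1..n}" "b \<in> {1..n}" using E_elem ME by blast
    then show "v \<le> n \<and> s v \<le> n" using sr \<open>v \<in> e\<close> by auto
  qed
  then have "card M' \<le> F n n" using UB[OF fin im] by auto
  then show "card M' \<le> card Mout" using Mout_card by simp
qed

end



definition prog :: "instr list" where
  "prog = [LoadC (-1) 1,
    LoadC (-13) 0,
    LoadC (-2) 1,
    Add (-10) 0 0,
    Jle (-2) 0 6,
    Jle (-1) (-1) 13,
    LoadI (-5) (-2),
    Add (-4) 0 (-2),
    StoreI (-4) (-5),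
    Add (-4) (-10) (-5),
    StoreI (-4) (-2),
    Add (-2) (-2) (-1),
    Jle (-1) (-1) 4,
    Add (-6) 0 (-1),
    Add (-11) (-10) 0,
    Add (-14) (-11) 0,
    Add (-14) (-14) (-1),
    Add (-14) (-14) (-1),
    Copy (-7) (-14),
    Add (-4) (-11) (-1),
    StoreI (-4) (-7),
    LoadC (-2) 1,
    Jle (-2) 0 24,
    Jle (-1) (-1) 58,
    Add (-7) (-7) (-6),
    Add (-4) (-11) (-1),
    Add (-4) (-4) (-2),
    StoreI (-4) (-7),
    LoadC (-3) 1,
    Jle (-3) 0 32,
    Add (-2) (-2) (-1),
    Jle (-1) (-1) 22,
    Sub (-4) (-7) (-6),
    Add (-4) (-4) (-3),
    LoadI (-5) (-4),
    Add (-4) (-7) (-3),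
    Sub (-4) (-4) (-1),
    LoadI (-8) (-4),
    Jle (-8) (-5) 40,
    Copy (-5) (-8),
    Add (-4) (-10) (-3),
    LoadI (-8) (-4),
    Jle (-2) (-8) 54,
    Add (-4) 0 (-2),
    LoadI (-12) (-4),
    Jle (-3) (-12) 54,
    Add (-4) (-11) (-8),
    LoadI (-4) (-4),
    Add (-4) (-4) (-12),
    Sub (-4) (-4) (-1),
    LoadI (-8) (-4),
    Add (-8) (-8) (-1),
    Jle (-8) (-5) 54,
    Copy (-5) (-8),
    Add (-4) (-7) (-3),
    StoreI (-4) (-5),
    Add (-3) (-3) (-1),
    Jle (-1) (-1) 29,
    Copy (-2) 0,
    Copy (-3) 0,
    LoadC (-9) 0,
    Jle (-2) (-13) 91,
    Jle (-3) (-13) 91,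
    Add (-4) (-11) (-1),
    Add (-4) (-4) (-2),
    LoadI (-7) (-4),
    Add (-4) (-7) (-3),
    LoadI (-5) (-4),
    Sub (-4) (-4) (-6),
    LoadI (-8) (-4),
    Jle (-5) (-8) 87,
    Add (-4) (-7) (-3),
    Sub (-4) (-4) (-1),
    LoadI (-8) (-4),
    Jle (-5) (-8) 89,
    Add (-12) 0 (-2),
    LoadI (-12) (-12),
    Add (-8) (-10) (-3),
    LoadI (-8) (-8),
    Add (-9) (-9) (-1),
    Add (-4) (-9) (-9),
    StoreI (-4) (-12),
    Sub (-4) (-4) (-1),
    StoreI (-4) (-3),
    Sub (-2) (-8) (-1),
    Sub (-3) (-12) (-1),
    Jle (-1) (-1) 61,
    Sub (-2) (-2) (-1),
    Jle (-1) (-1) 61,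
    Sub (-3) (-3) (-1),
    Jle (-1) (-1) 61,
    Copy 0 (-9),
    Halt]"
lemma prog_len: "length prog = 93" by (simp add: prog_def)
lemma prog_0: "prog ! 0 = LoadC (-1) 1" by (simp add: prog_def)
lemma prog_1: "prog ! 1 = LoadC (-13) 0" by (simp add: prog_def)
lemma prog_2: "prog ! 2 = LoadC (-2) 1" by (simp add: prog_def)
lemma prog_3: "prog ! 3 = Add (-10) 0 0" by (simp add: prog_def)
lemma prog_4: "prog ! 4 = Jle (-2) 0 6" by (simp add: prog_def)
lemma prog_5: "prog ! 5 = Jle (-1) (-1) 13" by (simp add: prog_def)
lemma prog_6: "prog ! 6 = LoadI (-5) (-2)" by (simp add: prog_def)
lemma prog_7: "prog ! 7 = Add (-4) 0 (-2)" by (simp add: prog_def)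
lemma prog_8: "prog ! 8 = StoreI (-4) (-5)" by (simp add: prog_def)
lemma prog_9: "prog ! 9 = Add (-4) (-10) (-5)" by (simp add: prog_def)
lemma prog_10: "prog ! 10 = StoreI (-4) (-2)" by (simp add: prog_def)
lemma prog_11: "prog ! 11 = Add (-2) (-2) (-1)" by (simp add: prog_def)
lemma prog_12: "prog ! 12 = Jle (-1) (-1) 4" by (simp add: prog_def)
lemma prog_13: "prog ! 13 = Add (-6) 0 (-1)" by (simp add: prog_def)
lemma prog_14: "prog ! 14 = Add (-11) (-10) 0" by (simp add: prog_def)
lemma prog_15: "prog ! 15 = Add (-14) (-11) 0" by (simp add: prog_def)
lemma prog_16: "prog ! 16 = Add (-14) (-14) (-1)" by (simp add: prog_def)
lemma prog_17: "prog ! 17 = Add (-14) (-14) (-1)" by (simp add: prog_def)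
lemma prog_18: "prog ! 18 = Copy (-7) (-14)" by (simp add: prog_def)
lemma prog_19: "prog ! 19 = Add (-4) (-11) (-1)" by (simp add: prog_def)
lemma prog_20: "prog ! 20 = StoreI (-4) (-7)" by (simp add: prog_def)
lemma prog_21: "prog ! 21 = LoadC (-2) 1" by (simp add: prog_def)
lemma prog_22: "prog ! 22 = Jle (-2) 0 24" by (simp add: prog_def)
lemma prog_23: "prog ! 23 = Jle (-1) (-1) 58" by (simp add: prog_def)
lemma prog_24: "prog ! 24 = Add (-7) (-7) (-6)" by (simp add: prog_def)
lemma prog_25: "prog ! 25 = Add (-4) (-11) (-1)" by (simp add: prog_def)
lemma prog_26: "prog ! 26 = Add (-4) (-4) (-2)" by (simp add: prog_def)
lemma prog_27: "prog ! 27 = StoreI (-4) (-7)" by (simp add: prog_def)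
lemma prog_28: "prog ! 28 = LoadC (-3) 1" by (simp add: prog_def)
lemma prog_29: "prog ! 29 = Jle (-3) 0 32" by (simp add: prog_def)
lemma prog_30: "prog ! 30 = Add (-2) (-2) (-1)" by (simp add: prog_def)
lemma prog_31: "prog ! 31 = Jle (-1) (-1) 22" by (simp add: prog_def)
lemma prog_32: "prog ! 32 = Sub (-4) (-7) (-6)" by (simp add: prog_def)
lemma prog_33: "prog ! 33 = Add (-4) (-4) (-3)" by (simp add: prog_def)
lemma prog_34: "prog ! 34 = LoadI (-5) (-4)" by (simp add: prog_def)
lemma prog_35: "prog ! 35 = Add (-4) (-7) (-3)" by (simp add: prog_def)
lemma prog_36: "prog ! 36 = Sub (-4) (-4) (-1)" by (simp add: prog_def)
lemma prog_37: "prog ! 37 = LoadI (-8) (-4)" by (simp add: prog_def)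
lemma prog_38: "prog ! 38 = Jle (-8) (-5) 40" by (simp add: prog_def)
lemma prog_39: "prog ! 39 = Copy (-5) (-8)" by (simp add: prog_def)
lemma prog_40: "prog ! 40 = Add (-4) (-10) (-3)" by (simp add: prog_def)
lemma prog_41: "prog ! 41 = LoadI (-8) (-4)" by (simp add: prog_def)
lemma prog_42: "prog ! 42 = Jle (-2) (-8) 54" by (simp add: prog_def)
lemma prog_43: "prog ! 43 = Add (-4) 0 (-2)" by (simp add: prog_def)
lemma prog_44: "prog ! 44 = LoadI (-12) (-4)" by (simp add: prog_def)
lemma prog_45: "prog ! 45 = Jle (-3) (-12) 54" by (simp add: prog_def)
lemma prog_46: "prog ! 46 = Add (-4) (-11) (-8)" by (simp add: prog_def)
lemma prog_47: "prog ! 47 = LoadI (-4) (-4)" by (simp add: prog_def)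
lemma prog_48: "prog ! 48 = Add (-4) (-4) (-12)" by (simp add: prog_def)
lemma prog_49: "prog ! 49 = Sub (-4) (-4) (-1)" by (simp add: prog_def)
lemma prog_50: "prog ! 50 = LoadI (-8) (-4)" by (simp add: prog_def)
lemma prog_51: "prog ! 51 = Add (-8) (-8) (-1)" by (simp add: prog_def)
lemma prog_52: "prog ! 52 = Jle (-8) (-5) 54" by (simp add: prog_def)
lemma prog_53: "prog ! 53 = Copy (-5) (-8)" by (simp add: prog_def)
lemma prog_54: "prog ! 54 = Add (-4) (-7) (-3)" by (simp add: prog_def)
lemma prog_55: "prog ! 55 = StoreI (-4) (-5)" by (simp add: prog_def)
lemma prog_56: "prog ! 56 = Add (-3) (-3) (-1)" by (simp add: prog_def)
lemma prog_57: "prog ! 57 = Jle (-1) (-1) 29" by (simp add: prog_def)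
lemma prog_58: "prog ! 58 = Copy (-2) 0" by (simp add: prog_def)
lemma prog_59: "prog ! 59 = Copy (-3) 0" by (simp add: prog_def)
lemma prog_60: "prog ! 60 = LoadC (-9) 0" by (simp add: prog_def)
lemma prog_61: "prog ! 61 = Jle (-2) (-13) 91" by (simp add: prog_def)
lemma prog_62: "prog ! 62 = Jle (-3) (-13) 91" by (simp add: prog_def)
lemma prog_63: "prog ! 63 = Add (-4) (-11) (-1)" by (simp add: prog_def)
lemma prog_64: "prog ! 64 = Add (-4) (-4) (-2)" by (simp add: prog_def)
lemma prog_65: "prog ! 65 = LoadI (-7) (-4)" by (simp add: prog_def)
lemma prog_66: "prog ! 66 = Add (-4) (-7) (-3)" by (simp add: prog_def)
lemma prog_67: "prog ! 67 = LoadI (-5) (-4)" by (simp add: prog_def)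
lemma prog_68: "prog ! 68 = Sub (-4) (-4) (-6)" by (simp add: prog_def)
lemma prog_69: "prog ! 69 = LoadI (-8) (-4)" by (simp add: prog_def)
lemma prog_70: "prog ! 70 = Jle (-5) (-8) 87" by (simp add: prog_def)
lemma prog_71: "prog ! 71 = Add (-4) (-7) (-3)" by (simp add: prog_def)
lemma prog_72: "prog ! 72 = Sub (-4) (-4) (-1)" by (simp add: prog_def)
lemma prog_73: "prog ! 73 = LoadI (-8) (-4)" by (simp add: prog_def)
lemma prog_74: "prog ! 74 = Jle (-5) (-8) 89" by (simp add: prog_def)
lemma prog_75: "prog ! 75 = Add (-12) 0 (-2)" by (simp add: prog_def)
lemma prog_76: "prog ! 76 = LoadI (-12) (-12)" by (simp add: prog_def)
lemma prog_77: "prog ! 77 = Add (-8) (-10) (-3)" by (simp add: prog_def)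
lemma prog_78: "prog ! 78 = LoadI (-8) (-8)" by (simp add: prog_def)
lemma prog_79: "prog ! 79 = Add (-9) (-9) (-1)" by (simp add: prog_def)
lemma prog_80: "prog ! 80 = Add (-4) (-9) (-9)" by (simp add: prog_def)
lemma prog_81: "prog ! 81 = StoreI (-4) (-12)" by (simp add: prog_def)
lemma prog_82: "prog ! 82 = Sub (-4) (-4) (-1)" by (simp add: prog_def)
lemma prog_83: "prog ! 83 = StoreI (-4) (-3)" by (simp add: prog_def)
lemma prog_84: "prog ! 84 = Sub (-2) (-8) (-1)" by (simp add: prog_def)
lemma prog_85: "prog ! 85 = Sub (-3) (-12) (-1)" by (simp add: prog_def)
lemma prog_86: "prog ! 86 = Jle (-1) (-1) 61" by (simp add: prog_def)
lemma prog_87: "prog ! 87 = Sub (-2) (-2) (-1)" by (simp add: prog_def)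
lemma prog_88: "prog ! 88 = Jle (-1) (-1) 61" by (simp add: prog_def)
lemma prog_89: "prog ! 89 = Sub (-3) (-3) (-1)" by (simp add: prog_def)
lemma prog_90: "prog ! 90 = Jle (-1) (-1) 61" by (simp add: prog_def)
lemma prog_91: "prog ! 91 = Copy 0 (-9)" by (simp add: prog_def)
lemma prog_92: "prog ! 92 = Halt" by (simp add: prog_def)
lemmas prog_nths = prog_0 prog_1 prog_2 prog_3 prog_4 prog_5 prog_6 prog_7 prog_8 prog_9 prog_10 prog_11 prog_12 prog_13 prog_14 prog_15 prog_16 prog_17 prog_18 prog_19 prog_20 prog_21 prog_22 prog_23 prog_24 prog_25 prog_26 prog_27 prog_28 prog_29 prog_30 prog_31 prog_32 prog_33 prog_34 prog_35 prog_36 prog_37 prog_38 prog_39 prog_40 prog_41 prog_42 prog_43 prog_44 prog_45 prog_46 prog_47 prog_48 prog_49 prog_50 prog_51 prog_52 prog_53 prog_54 prog_55 prog_56 prog_57 prog_58 prog_59 prog_60 prog_61 prog_62 prog_63 prog_64 prog_65 prog_66 prog_67 prog_68 prog_69 prog_70 prog_71 prog_72 prog_73 prog_74 prog_75 prog_76 prog_77 prog_78 prog_79 prog_80 prog_81 prog_82 prog_83 prog_84 prog_85 prog_86 prog_87 prog_88 prog_89 prog_90 prog_91 prog_92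
lemma step_0: "step prog (0, m) = exec (LoadC (-1) 1) (0, m)" by (simp add: step_def halted_def prog_def)
lemma step_1: "step prog (1, m) = exec (LoadC (-13) 0) (1, m)" by (simp add: step_def halted_def prog_def)
lemma step_1': "step prog (Suc 0, m) = exec (LoadC (-13) 0) (1, m)" by (simp add: step_def halted_def prog_def)
lemma step_2': "step prog (Suc (Suc 0), m) = exec (LoadC (-2) 1) (2, m)" by (simp add: step_def halted_def prog_def)
lemma step_3': "step prog (Suc (Suc (Suc 0)), m) = exec (Add (-10) 0 0) (3, m)" by (simp add: step_def halted_def prog_def)
lemma step_2: "step prog (2, m) = exec (LoadC (-2) 1) (2, m)" by (simp add: step_def halted_def prog_def)
lemma step_3: "step prog (3, m) = exec (Add (-10) 0 0) (3, m)" by (simp add: step_def halted_def prog_def)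
lemma step_4: "step prog (4, m) = exec (Jle (-2) 0 6) (4, m)" by (simp add: step_def halted_def prog_def)
lemma step_5: "step prog (5, m) = exec (Jle (-1) (-1) 13) (5, m)" by (simp add: step_def halted_def prog_def)
lemma step_6: "step prog (6, m) = exec (LoadI (-5) (-2)) (6, m)" by (simp add: step_def halted_def prog_def)
lemma step_7: "step prog (7, m) = exec (Add (-4) 0 (-2)) (7, m)" by (simp add: step_def halted_def prog_def)
lemma step_8: "step prog (8, m) = exec (StoreI (-4) (-5)) (8, m)" by (simp add: step_def halted_def prog_def)
lemma step_9: "step prog (9, m) = exec (Add (-4) (-10) (-5)) (9, m)" by (simp add: step_def halted_def prog_def)
lemma step_10: "step prog (10, m) = exec (StoreI (-4) (-2)) (10, m)" by (simp add: step_def halted_def prog_def)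
lemma step_11: "step prog (11, m) = exec (Add (-2) (-2) (-1)) (11, m)" by (simp add: step_def halted_def prog_def)
lemma step_12: "step prog (12, m) = exec (Jle (-1) (-1) 4) (12, m)" by (simp add: step_def halted_def prog_def)
lemma step_13: "step prog (13, m) = exec (Add (-6) 0 (-1)) (13, m)" by (simp add: step_def halted_def prog_def)
lemma step_14: "step prog (14, m) = exec (Add (-11) (-10) 0) (14, m)" by (simp add: step_def halted_def prog_def)
lemma step_15: "step prog (15, m) = exec (Add (-14) (-11) 0) (15, m)" by (simp add: step_def halted_def prog_def)
lemma step_16: "step prog (16, m) = exec (Add (-14) (-14) (-1)) (16, m)" by (simp add: step_def halted_def prog_def)
lemma step_17: "step prog (17, m) = exec (Add (-14) (-14) (-1)) (17, m)" by (simp add: step_def halted_def prog_def)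
lemma step_18: "step prog (18, m) = exec (Copy (-7) (-14)) (18, m)" by (simp add: step_def halted_def prog_def)
lemma step_19: "step prog (19, m) = exec (Add (-4) (-11) (-1)) (19, m)" by (simp add: step_def halted_def prog_def)
lemma step_20: "step prog (20, m) = exec (StoreI (-4) (-7)) (20, m)" by (simp add: step_def halted_def prog_def)
lemma step_21: "step prog (21, m) = exec (LoadC (-2) 1) (21, m)" by (simp add: step_def halted_def prog_def)
lemma step_22: "step prog (22, m) = exec (Jle (-2) 0 24) (22, m)" by (simp add: step_def halted_def prog_def)
lemma step_23: "step prog (23, m) = exec (Jle (-1) (-1) 58) (23, m)" by (simp add: step_def halted_def prog_def)
lemma step_24: "step prog (24, m) = exec (Add (-7) (-7) (-6)) (24, m)" by (simp add: step_def halted_def prog_def)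
lemma step_25: "step prog (25, m) = exec (Add (-4) (-11) (-1)) (25, m)" by (simp add: step_def halted_def prog_def)
lemma step_26: "step prog (26, m) = exec (Add (-4) (-4) (-2)) (26, m)" by (simp add: step_def halted_def prog_def)
lemma step_27: "step prog (27, m) = exec (StoreI (-4) (-7)) (27, m)" by (simp add: step_def halted_def prog_def)
lemma step_28: "step prog (28, m) = exec (LoadC (-3) 1) (28, m)" by (simp add: step_def halted_def prog_def)
lemma step_29: "step prog (29, m) = exec (Jle (-3) 0 32) (29, m)" by (simp add: step_def halted_def prog_def)
lemma step_30: "step prog (30, m) = exec (Add (-2) (-2) (-1)) (30, m)" by (simp add: step_def halted_def prog_def)
lemma step_31: "step prog (31, m) = exec (Jle (-1) (-1) 22) (31, m)" by (simp add: step_def halted_def prog_def)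
lemma step_32: "step prog (32, m) = exec (Sub (-4) (-7) (-6)) (32, m)" by (simp add: step_def halted_def prog_def)
lemma step_33: "step prog (33, m) = exec (Add (-4) (-4) (-3)) (33, m)" by (simp add: step_def halted_def prog_def)
lemma step_34: "step prog (34, m) = exec (LoadI (-5) (-4)) (34, m)" by (simp add: step_def halted_def prog_def)
lemma step_35: "step prog (35, m) = exec (Add (-4) (-7) (-3)) (35, m)" by (simp add: step_def halted_def prog_def)
lemma step_36: "step prog (36, m) = exec (Sub (-4) (-4) (-1)) (36, m)" by (simp add: step_def halted_def prog_def)
lemma step_37: "step prog (37, m) = exec (LoadI (-8) (-4)) (37, m)" by (simp add: step_def halted_def prog_def)
lemma step_38: "step prog (38, m) = exec (Jle (-8) (-5) 40) (38, m)" by (simp add: step_def halted_def prog_def)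
lemma step_39: "step prog (39, m) = exec (Copy (-5) (-8)) (39, m)" by (simp add: step_def halted_def prog_def)
lemma step_40: "step prog (40, m) = exec (Add (-4) (-10) (-3)) (40, m)" by (simp add: step_def halted_def prog_def)
lemma step_41: "step prog (41, m) = exec (LoadI (-8) (-4)) (41, m)" by (simp add: step_def halted_def prog_def)
lemma step_42: "step prog (42, m) = exec (Jle (-2) (-8) 54) (42, m)" by (simp add: step_def halted_def prog_def)
lemma step_43: "step prog (43, m) = exec (Add (-4) 0 (-2)) (43, m)" by (simp add: step_def halted_def prog_def)
lemma step_44: "step prog (44, m) = exec (LoadI (-12) (-4)) (44, m)" by (simp add: step_def halted_def prog_def)
lemma step_45: "step prog (45, m) = exec (Jle (-3) (-12) 54) (45, m)" by (simp add: step_def halted_def prog_def)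
lemma step_46: "step prog (46, m) = exec (Add (-4) (-11) (-8)) (46, m)" by (simp add: step_def halted_def prog_def)
lemma step_47: "step prog (47, m) = exec (LoadI (-4) (-4)) (47, m)" by (simp add: step_def halted_def prog_def)
lemma step_48: "step prog (48, m) = exec (Add (-4) (-4) (-12)) (48, m)" by (simp add: step_def halted_def prog_def)
lemma step_49: "step prog (49, m) = exec (Sub (-4) (-4) (-1)) (49, m)" by (simp add: step_def halted_def prog_def)
lemma step_50: "step prog (50, m) = exec (LoadI (-8) (-4)) (50, m)" by (simp add: step_def halted_def prog_def)
lemma step_51: "step prog (51, m) = exec (Add (-8) (-8) (-1)) (51, m)" by (simp add: step_def halted_def prog_def)
lemma step_52: "step prog (52, m) = exec (Jle (-8) (-5) 54) (52, m)" by (simp add: step_def halted_def prog_def)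
lemma step_53: "step prog (53, m) = exec (Copy (-5) (-8)) (53, m)" by (simp add: step_def halted_def prog_def)
lemma step_54: "step prog (54, m) = exec (Add (-4) (-7) (-3)) (54, m)" by (simp add: step_def halted_def prog_def)
lemma step_55: "step prog (55, m) = exec (StoreI (-4) (-5)) (55, m)" by (simp add: step_def halted_def prog_def)
lemma step_56: "step prog (56, m) = exec (Add (-3) (-3) (-1)) (56, m)" by (simp add: step_def halted_def prog_def)
lemma step_57: "step prog (57, m) = exec (Jle (-1) (-1) 29) (57, m)" by (simp add: step_def halted_def prog_def)
lemma step_58: "step prog (58, m) = exec (Copy (-2) 0) (58, m)" by (simp add: step_def halted_def prog_def)
lemma step_59: "step prog (59, m) = exec (Copy (-3) 0) (59, m)" by (simp add: step_def halted_def prog_def)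
lemma step_60: "step prog (60, m) = exec (LoadC (-9) 0) (60, m)" by (simp add: step_def halted_def prog_def)
lemma step_61: "step prog (61, m) = exec (Jle (-2) (-13) 91) (61, m)" by (simp add: step_def halted_def prog_def)
lemma step_62: "step prog (62, m) = exec (Jle (-3) (-13) 91) (62, m)" by (simp add: step_def halted_def prog_def)
lemma step_63: "step prog (63, m) = exec (Add (-4) (-11) (-1)) (63, m)" by (simp add: step_def halted_def prog_def)
lemma step_64: "step prog (64, m) = exec (Add (-4) (-4) (-2)) (64, m)" by (simp add: step_def halted_def prog_def)
lemma step_65: "step prog (65, m) = exec (LoadI (-7) (-4)) (65, m)" by (simp add: step_def halted_def prog_def)
lemma step_66: "step prog (66, m) = exec (Add (-4) (-7) (-3)) (66, m)" by (simp add: step_def halted_def prog_def)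
lemma step_67: "step prog (67, m) = exec (LoadI (-5) (-4)) (67, m)" by (simp add: step_def halted_def prog_def)
lemma step_68: "step prog (68, m) = exec (Sub (-4) (-4) (-6)) (68, m)" by (simp add: step_def halted_def prog_def)
lemma step_69: "step prog (69, m) = exec (LoadI (-8) (-4)) (69, m)" by (simp add: step_def halted_def prog_def)
lemma step_70: "step prog (70, m) = exec (Jle (-5) (-8) 87) (70, m)" by (simp add: step_def halted_def prog_def)
lemma step_71: "step prog (71, m) = exec (Add (-4) (-7) (-3)) (71, m)" by (simp add: step_def halted_def prog_def)
lemma step_72: "step prog (72, m) = exec (Sub (-4) (-4) (-1)) (72, m)" by (simp add: step_def halted_def prog_def)
lemma step_73: "step prog (73, m) = exec (LoadI (-8) (-4)) (73, m)" by (simp add: step_def halted_def prog_def)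
lemma step_74: "step prog (74, m) = exec (Jle (-5) (-8) 89) (74, m)" by (simp add: step_def halted_def prog_def)
lemma step_75: "step prog (75, m) = exec (Add (-12) 0 (-2)) (75, m)" by (simp add: step_def halted_def prog_def)
lemma step_76: "step prog (76, m) = exec (LoadI (-12) (-12)) (76, m)" by (simp add: step_def halted_def prog_def)
lemma step_77: "step prog (77, m) = exec (Add (-8) (-10) (-3)) (77, m)" by (simp add: step_def halted_def prog_def)
lemma step_78: "step prog (78, m) = exec (LoadI (-8) (-8)) (78, m)" by (simp add: step_def halted_def prog_def)
lemma step_79: "step prog (79, m) = exec (Add (-9) (-9) (-1)) (79, m)" by (simp add: step_def halted_def prog_def)
lemma step_80: "step prog (80, m) = exec (Add (-4) (-9) (-9)) (80, m)" by (simp add: step_def halted_def prog_def)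
lemma step_81: "step prog (81, m) = exec (StoreI (-4) (-12)) (81, m)" by (simp add: step_def halted_def prog_def)
lemma step_82: "step prog (82, m) = exec (Sub (-4) (-4) (-1)) (82, m)" by (simp add: step_def halted_def prog_def)
lemma step_83: "step prog (83, m) = exec (StoreI (-4) (-3)) (83, m)" by (simp add: step_def halted_def prog_def)
lemma step_84: "step prog (84, m) = exec (Sub (-2) (-8) (-1)) (84, m)" by (simp add: step_def halted_def prog_def)
lemma step_85: "step prog (85, m) = exec (Sub (-3) (-12) (-1)) (85, m)" by (simp add: step_def halted_def prog_def)
lemma step_86: "step prog (86, m) = exec (Jle (-1) (-1) 61) (86, m)" by (simp add: step_def halted_def prog_def)
lemma step_87: "step prog (87, m) = exec (Sub (-2) (-2) (-1)) (87, m)" by (simp add: step_def halted_def prog_def)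
lemma step_88: "step prog (88, m) = exec (Jle (-1) (-1) 61) (88, m)" by (simp add: step_def halted_def prog_def)
lemma step_89: "step prog (89, m) = exec (Sub (-3) (-3) (-1)) (89, m)" by (simp add: step_def halted_def prog_def)
lemma step_90: "step prog (90, m) = exec (Jle (-1) (-1) 61) (90, m)" by (simp add: step_def halted_def prog_def)
lemma step_91: "step prog (91, m) = exec (Copy 0 (-9)) (91, m)" by (simp add: step_def halted_def prog_def)


lemma run_0[simp]: "run P 0 c = c" by (simp add: run_def)
lemma run_Suc: "run P (Suc k) c = run P k (step P c)"
  by (simp only: run_def funpow_Suc_right comp_def)
lemma run_1: "run P 1 c = step P c"
  by (simp add: run_def)
lemma run_num: "run P (numeral k) c = run P (pred_numeral k) (step P c)"
  by (simp add: numeral_eq_Suc run_Suc)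
lemmas sim = run_Suc run_1 run_num step_0 step_1 step_1' step_2' step_3' step_2 step_3 step_4 step_5 step_6 step_7 step_8 step_9 step_10 step_11 step_12 step_13 step_14 step_15 step_16 step_17 step_18 step_19 step_20 step_21 step_22 step_23 step_24 step_25 step_26 step_27 step_28 step_29 step_30 step_31 step_32 step_33 step_34 step_35 step_36 step_37 step_38 step_39 step_40 step_41 step_42 step_43 step_44 step_45 step_46 step_47 step_48 step_49 step_50 step_51 step_52 step_53 step_54 step_55 step_56 step_57 step_58 step_59 step_60 step_61 step_62 step_63 step_64 step_65 step_66 step_67 step_68 step_69 step_70 step_71 step_72 step_73 step_74 step_75 step_76 step_77 step_78 step_79 step_80 step_81 step_82 step_83 step_84 step_85 step_86 step_87 step_88 step_89 step_90 step_91

lemma run_add: "run P (a + b) c = run P b (run P a c)"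
  by (simp add: run_def add.commute[of a b] funpow_add)

lemma blk_inner:
  fixes R U Lf S Q R2 G :: nat
  assumes r1: "m (-1) = 1" and rI: "m (-2) = int x" and rJ: "m (-3) = int y" and rW: "m (-6) = int n + 1"
   and rRB: "m (-7) = int R + (int n + 1)" and rN: "m 0 = int n" and rN2: "m (-10) = 2 * int n" and rN3: "m (-11) = 3 * int n"
   and u: "m (int R + int y) = int U"
   and l: "m (int R + (int n + 1) + int y - 1) = int Lf"
   and sg: "m (2 * int n + int y) = int S"
   and px: "m (int n + int x) = int Q"
   and rbs: "S < x \<Longrightarrow> Q < y \<Longrightarrow> m (3 * int n + int S) = int R2"
   and dg: "S < x \<Longrightarrow> Q < y \<Longrightarrow> m (int R2 + int Q - 1) = int G"
  shows "\<exists>k m'. k \<le> 26 \<and> run prog k (32, m) = (29, m') \<and> m' (-3) = int y + 1 \<and>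
     m' (int R + (int n + 1) + int y) = int (max (max U Lf) (if S < x \<and> Q < y then Suc G else 0)) \<and>
     (\<forall>a. a \<notin> {-3,-4,-5,-8,-12} \<longrightarrow> a \<noteq> int R + (int n + 1) + int y \<longrightarrow> m' a = m a)"
proof -
  consider (nb1) "x \<le> S" | (nb2) "\<not> x \<le> S" "y \<le> Q" | (b1) "\<not> x \<le> S" "\<not> y \<le> Q" "Suc G \<le> max U Lf"
    | (b2) "\<not> x \<le> S" "\<not> y \<le> Q" "\<not> Suc G \<le> max U Lf" by linarith
  then show ?thesis
  proof cases
    case nb1
    show ?thesis
    proof (cases "Lf \<le> U")
      case True show ?thesis apply (rule exI[of _ 14]) using assms True nb1 by (simp add: sim)
    next
      case False show ?thesis apply (rule exI[of _ 15]) using assms False nb1 by (simp add: sim)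
    qed
  next
    case nb2
    show ?thesis
    proof (cases "Lf \<le> U")
      case True show ?thesis apply (rule exI[of _ 17]) using assms True nb2 by (simp add: sim)
    next
      case False show ?thesis apply (rule exI[of _ 18]) using assms False nb2 by (simp add: sim)
    qed
  next
    case b1
    show ?thesis
    proof (cases "Lf \<le> U")
      case True show ?thesis apply (rule exI[of _ 24]) using assms True b1 by (simp add: sim max_def)
    next
      case False show ?thesis apply (rule exI[of _ 25]) using assms False b1 by (simp add: sim max_def)
    qed
  next
    case b2
    show ?thesis
    proof (cases "Lf \<le> U")
      case True show ?thesis apply (rule exI[of _ 25]) using assms True b2 by (simp add: sim max_def)
    next
      case False show ?thesis apply (rule exI[of _ 26]) using assms False b2 by (simp add: sim max_def)
    qed
  qed
qed


lemma blk_init: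
  assumes "m 0 = int n"
  shows "\<exists>m'. run prog 4 (0, m) = (4, m') \<and> m' 0 = int n \<and> m' (-1) = 1 \<and> m' (-13) = 0 \<and> m' (-2) = 1 \<and>
    m' (-10) = 2 * int n \<and> (\<forall>a. a \<notin> {-1,-13,-2,-10} \<longrightarrow> m' a = m a)"
  using assms by (simp add: sim)

lemma blk_h1a: "m (-2) = int i \<Longrightarrow> m 0 = int n \<Longrightarrow> i \<le> n \<Longrightarrow> run prog 1 (4, m) = (6, m)"
  by (simp add: sim)
lemma blk_h1b: "m (-2) = int i \<Longrightarrow> m 0 = int n \<Longrightarrow> \<not> i \<le> n \<Longrightarrow> run prog 2 (4, m) = (13, m)"
  by (simp add: sim)

lemma blk_body1:
  assumes "m (-2) = int i" "m 0 = int n" "m (-1) = 1" "m (-10) = 2 * int n" "m (int i) = int P"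
    "int n + int i \<noteq> 2 * int n + int P"
  shows "\<exists>m'. run prog 7 (6, m) = (4, m') \<and> m' (-2) = int i + 1 \<and> m' (int n + int i) = int P \<and>
    m' (2 * int n + int P) = int i \<and>
    (\<forall>a. a \<notin> {-2,-4,-5} \<longrightarrow> a \<noteq> int n + int i \<longrightarrow> a \<noteq> 2 * int n + int P \<longrightarrow> m' a = m a)"
  using assms by (simp add: sim)

lemma blk_p2:
  assumes "m 0 = int n" "m (-1) = 1" "m (-10) = 2 * int n"
  shows "\<exists>m'. run prog 9 (13, m) = (22, m') \<and> m' (-6) = int n + 1 \<and> m' (-11) = 3 * int n \<and>
    m' (-7) = 4 * int n + 2 \<and> m' (3 * int n + 1) = 4 * int n + 2 \<and> m' (-2) = 1 \<and>
    (\<forall>a. a \<notin> {-4,-6,-11,-14,-7,-2} \<longrightarrow> a \<noteq> 3 * int n + 1 \<longrightarrow> m' a = m a)"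
  using assms by (simp add: sim)

lemma blk_h2a: "m (-2) = int x \<Longrightarrow> m 0 = int n \<Longrightarrow> x \<le> n \<Longrightarrow> run prog 1 (22, m) = (24, m)"
  by (simp add: sim)
lemma blk_h2b: "m (-2) = int x \<Longrightarrow> m 0 = int n \<Longrightarrow> m (-1) = 1 \<Longrightarrow> \<not> x \<le> n \<Longrightarrow> run prog 2 (22, m) = (58, m)"
  by (simp add: sim)

lemma blk_row:
  assumes "m (-2) = int x" "m (-1) = 1" "m (-11) = 3 * int n" "m (-7) = int R" "m (-6) = int n + 1"
  shows "\<exists>m'. run prog 5 (24, m) = (29, m') \<and> m' (-7) = int R + (int n + 1) \<and>
    m' (3 * int n + 1 + int x) = int R + (int n + 1) \<and> m' (-3) = 1 \<and>
    (\<forall>a. a \<notin> {-7,-4,-3} \<longrightarrow> a \<noteq> 3 * int n + 1 + int x \<longrightarrow> m' a = m a)"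
  using assms by (simp add: sim)

lemma blk_h3a: "m (-3) = int y \<Longrightarrow> m 0 = int n \<Longrightarrow> y \<le> n \<Longrightarrow> run prog 1 (29, m) = (32, m)"
  by (simp add: sim)
lemma blk_h3b: "m (-3) = int y \<Longrightarrow> m 0 = int n \<Longrightarrow> m (-1) = 1 \<Longrightarrow> m (-2) = int x \<Longrightarrow> \<not> y \<le> n \<Longrightarrow>
  \<exists>m'. run prog 3 (29, m) = (22, m') \<and> m' (-2) = int x + 1 \<and> (\<forall>a. a \<noteq> -2 \<longrightarrow> m' a = m a)"
  by (simp add: sim)

lemma blk_p3: "m 0 = int n \<Longrightarrow>
  \<exists>m'. run prog 3 (58, m) = (61, m') \<and> m' (-2) = int n \<and> m' (-3) = int n \<and> m' (-9) = 0 \<and>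
    (\<forall>a. a \<notin> {-2,-3,-9} \<longrightarrow> m' a = m a)"
  by (simp add: sim)

lemma blk_h4a: "m (-2) = int x \<Longrightarrow> m (-13) = 0 \<Longrightarrow> x = 0 \<Longrightarrow> run prog 1 (61, m) = (91, m)"
  by (simp add: sim)
lemma blk_h4b: "m (-2) = int x \<Longrightarrow> m (-3) = int y \<Longrightarrow> m (-13) = 0 \<Longrightarrow> x \<noteq> 0 \<Longrightarrow> y = 0 \<Longrightarrow> run prog 2 (61, m) = (91, m)"
  by (simp add: sim)
lemma blk_h4c: "m (-2) = int x \<Longrightarrow> m (-3) = int y \<Longrightarrow> m (-13) = 0 \<Longrightarrow> x \<noteq> 0 \<Longrightarrow> y \<noteq> 0 \<Longrightarrow> run prog 2 (61, m) = (63, m)"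
  by (simp add: sim)

lemma blk_end: "\<exists>m'. run prog 1 (91, m) = (92, m') \<and> m' 0 = m (-9) \<and> (\<forall>a. a \<noteq> 0 \<longrightarrow> m' a = m a)"
  by (simp add: sim)
lemma halted_92: "halted prog (92, m)"
  by (simp add: halted_def prog_def)

lemma blk_tb:
  fixes R V U Lf S Q c :: nat
  assumes r1: "m (-1) = 1" and rI: "m (-2) = int x" and rJ: "m (-3) = int y" and rW: "m (-6) = int n + 1"
   and rN: "m 0 = int n" and rN2: "m (-10) = 2 * int n" and rN3: "m (-11) = 3 * int n" and rC: "m (-9) = int c"
   and rb: "m (3 * int n + 1 + int x) = int R + (int n + 1)"
   and v: "m (int R + (int n + 1) + int y) = int V"
   and u: "m (int R + int y) = int U"
   and l: "m (int R + (int n + 1) + int y - 1) = int Lf"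
   and sg: "m (2 * int n + int y) = int S"
   and px: "m (int n + int x) = int Q"
  shows "(V \<le> U \<longrightarrow> (\<exists>m'. run prog 10 (63, m) = (61, m') \<and> m' (-2) = int x - 1 \<and>
            (\<forall>a. a \<notin> {-2,-4,-5,-7,-8} \<longrightarrow> m' a = m a))) \<and>
         (\<not> V \<le> U \<longrightarrow> V \<le> Lf \<longrightarrow> (\<exists>m'. run prog 14 (63, m) = (61, m') \<and> m' (-3) = int y - 1 \<and>
            (\<forall>a. a \<notin> {-3,-4,-5,-7,-8} \<longrightarrow> m' a = m a))) \<and>
         (\<not> V \<le> U \<longrightarrow> \<not> V \<le> Lf \<longrightarrow> (\<exists>m'. run prog 24 (63, m) = (61, m') \<and> m' (-2) = int S - 1 \<and>
            m' (-3) = int Q - 1 \<and> m' (-9) = int c + 1 \<and> m' (2 * int c + 1) = int y \<and> m' (2 * int c + 2) = int Q \<and>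
            (\<forall>a. a \<notin> {-2,-3,-4,-5,-7,-8,-9,-12} \<longrightarrow> a \<noteq> 2 * int c + 1 \<longrightarrow> a \<noteq> 2 * int c + 2 \<longrightarrow> m' a = m a)))"
  using assms by (simp add: sim)




lemma loop_rule:
  assumes it: "\<And>d m. I (Suc d) m \<Longrightarrow> (\<exists>k m'. k \<le> K \<and> run P k (h, m) = (h, m') \<and> I d m') \<or>
                                    (\<exists>k m'. k \<le> K0 \<and> run P k (h, m) = (e, m') \<and> Q m')"
    and ex: "\<And>m. I 0 m \<Longrightarrow> \<exists>k m'. k \<le> K0 \<and> run P k (h, m) = (e, m') \<and> Q m'"
  shows "I d m \<Longrightarrow> \<exists>k m'. k \<le> d * K + K0 \<and> run P k (h, m) = (e, m') \<and> Q m'"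
proof (induction d arbitrary: m)
  case 0 then show ?case using ex by auto
next
  case (Suc d)
  from it[OF Suc.prems] show ?case
  proof
    assume "\<exists>k m'. k \<le> K \<and> run P k (h, m) = (h, m') \<and> I d m'"
    then obtain k1 m1 where 1: "k1 \<le> K" "run P k1 (h, m) = (h, m1)" "I d m1" by blast
    from Suc.IH[OF 1(3)] obtain k2 m2 where 2: "k2 \<le> d * K + K0" "run P k2 (h, m1) = (e, m2)" "Q m2" by blast
    have "run P (k1 + k2) (h, m) = (e, m2)" using 1(2) 2(2) by (simp add: run_add)
    moreover have "k1 + k2 \<le> Suc d * K + K0" using 1(1) 2(1) by simp
    ultimately show ?thesis using 2(3) by blast
  next
    assume "\<exists>k m'. k \<le> K0 \<and> run P k (h, m) = (e, m') \<and> Q m'"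
    then show ?thesis by (meson le_add2 order_trans)
  qed
qed

lemma run_seq: "run P k1 c = c1 \<Longrightarrow> run P k2 c1 = c2 \<Longrightarrow> run P (k1 + k2) c = c2"
  by (simp add: run_add)

definition rbv :: "nat \<Rightarrow> nat \<Rightarrow> nat" where "rbv n x = 4*n + 2 + x*(n+1)"

lemma rbv_Suc: "rbv n (Suc x) = rbv n x + (n+1)" unfolding rbv_def by simp
lemma rbv_ge: "rbv n x \<ge> 4*n + 2" unfolding rbv_def by simp
lemma rbv_prev: "x \<ge> 1 \<Longrightarrow> int (rbv n x) = int (rbv n (x-1)) + (int n + 1)"
  using rbv_Suc[of n "x-1"] by simp
lemma rbv_inj: assumes "y \<le> n" "y' \<le> n" "rbv n x + y = rbv n x' + y'" shows "x = x' \<and> y = y'"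
proof -
  have a: "x * (n+1) + y = x' * (n+1) + y'" using assms(3) unfolding rbv_def by simp
  have "x = x'"
  proof (rule ccontr)
    assume "x \<noteq> x'"
    then have "x < x' \<or> x' < x" by arith
    then show False
    proof
      assume "x < x'"
      then have "(x+1) * (n+1) \<le> x' * (n+1)" by (intro mult_le_mono1) simp
      then show False using a assms(1) by simp
    next
      assume "x' < x"
      then have "(x'+1) * (n+1) \<le> x * (n+1)" by (intro mult_le_mono1) simp
      then show False using a assms(2) by simp
    qed
  qed
  then show ?thesis using a by simp
qed

locale pg1 = pg +
  assumes n1: "1 \<le> n"
begin

definition inv1 :: "nat \<Rightarrow> (int \<Rightarrow> int) \<Rightarrow> bool" where
  "inv1 i m \<longleftrightarrow> m 0 = int n \<and> m (-1) = 1 \<and> m (-13) = 0 \<and> m (-2) = int i \<and> m (-10) = 2 * int n \<and>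
     (\<forall>j\<in>{1..n}. m (int j) = int (p j)) \<and>
     (\<forall>j. 1 \<le> j \<and> j < i \<longrightarrow> m (int n + int j) = int (p j)) \<and>
     (\<forall>j. 1 \<le> j \<and> j < i \<longrightarrow> m (2 * int n + int (p j)) = int j) \<and>
     (\<forall>a. a > 3 * int n \<longrightarrow> m a = 0)"

lemma phase1_start: "\<exists>m'. run prog 4 (0, input_mem n p) = (4, m') \<and> inv1 1 m'"
proof -
  have "input_mem n p 0 = int n" by (simp add: input_mem_def)
  from blk_init[where m="input_mem n p" and n=n, OF this] obtain m' where m': "run prog 4 (0, input_mem n p) = (4, m')" "m' 0 = int n"
    "m' (-1) = 1" "m' (-13) = 0" "m' (-2) = 1" "m' (-10) = 2 * int n"
    "\<forall>a. a \<notin> {-1,-13,-2,-10} \<longrightarrow> m' a = input_mem n p a" by blast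
  have "inv1 1 m'" unfolding inv1_def
  proof (intro conjI)
    show "\<forall>j\<in>{1..n}. m' (int j) = int (p j)"
    proof
      fix j :: nat assume "j \<in> {1..n}"
      then show "m' (int j) = int (p j)" using m'(7) by (auto simp: input_mem_def)
    qed
    show "\<forall>a. a > 3 * int n \<longrightarrow> m' a = 0"
      using m'(7) by (auto simp: input_mem_def)
  qed (use m' in auto)
  then show ?thesis using m'(1) by blast
qed

lemma body1:
  assumes inv: "inv1 i m" and i: "1 \<le> i" "i \<le> n"
  shows "\<exists>m'. run prog 8 (4, m) = (4, m') \<and> inv1 (i+1) m'"
proof -
  have r: "m (-2) = int i" "m 0 = int n" "m (-1) = 1" "m (-10) = 2 * int n" "m (-13) = 0"
    using inv unfolding inv1_def by auto
  have mi: "m (int i) = int (p i)" using inv i unfolding inv1_def by auto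
  have pi: "p i \<in> {1..n}" using pr i by auto
  have ne: "int n + int i \<noteq> 2 * int n + int (p i)" using i pi by auto
  from blk_body1[OF r(1-4) mi ne] obtain m' where m': "run prog 7 (6, m) = (4, m')" "m' (-2) = int i + 1"
    "m' (int n + int i) = int (p i)" "m' (2 * int n + int (p i)) = int i"
    "\<forall>a. a \<notin> {-2,-4,-5} \<longrightarrow> a \<noteq> int n + int i \<longrightarrow> a \<noteq> 2 * int n + int (p i) \<longrightarrow> m' a = m a" by blast
  have run: "run prog 8 (4, m) = (4, m')"
    using run_seq[OF blk_h1a[OF r(1,2) i(2)] m'(1)] by simp
  have fr: "m' a = m a" if "a \<notin> {-2,-4,-5}" "a \<noteq> int n + int i" "a \<noteq> 2 * int n + int (p i)" for a
    using m'(5) that by blast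
  have "inv1 (i+1) m'" unfolding inv1_def
  proof (intro conjI)
    show "m' 0 = int n" "m' (-1) = 1" "m' (-13) = 0" "m' (-10) = 2 * int n"
      using fr r i by auto
    show "m' (-2) = int (i+1)" using m'(2) by simp
    show "\<forall>j\<in>{1..n}. m' (int j) = int (p j)"
    proof
      fix j :: nat assume j: "j \<in> {1..n}"
      have "m' (int j) = m (int j)" using j i pi by (intro fr) auto
      then show "m' (int j) = int (p j)" using inv j unfolding inv1_def by auto
    qed
    show "\<forall>j. 1 \<le> j \<and> j < i + 1 \<longrightarrow> m' (int n + int j) = int (p j)"
    proof (intro allI impI)
      fix j assume j: "1 \<le> j \<and> j < i + 1"
      show "m' (int n + int j) = int (p j)"
      proof (cases "j = i")
        case True then show ?thesis using m'(3) by simp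
      next
        case False
        have "m' (int n + int j) = m (int n + int j)" using j i pi False by (intro fr) auto
        then show ?thesis using inv j False unfolding inv1_def by auto
      qed
    qed
    show "\<forall>j. 1 \<le> j \<and> j < i + 1 \<longrightarrow> m' (2 * int n + int (p j)) = int j"
    proof (intro allI impI)
      fix j assume j: "1 \<le> j \<and> j < i + 1"
      show "m' (2 * int n + int (p j)) = int j"
      proof (cases "j = i")
        case True then show ?thesis using m'(4) by simp
      next
        case False
        have "p j \<noteq> p i" using False pinj by auto
        moreover have "p j \<ge> 1" using p1 j by auto
        ultimately have "m' (2 * int n + int (p j)) = m (2 * int n + int (p j))" using j i pi False by (intro fr) auto
        then show ?thesis using inv j False unfolding inv1_def by auto
      qed
    qed
    show "\<forall>a. a > 3 * int n \<longrightarrow> m' a = 0"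
    proof (intro allI impI)
      fix a assume a: "a > 3 * int n"
      have "m' a = m a" using a i pi by (intro fr) auto
      then show "m' a = 0" using inv a unfolding inv1_def by auto
    qed
  qed
  then show ?thesis using run by blast
qed

lemma loop1: assumes "inv1 1 m" shows "\<exists>k m'. k \<le> n * 8 + 2 \<and> run prog k (4, m) = (13, m') \<and> inv1 (n+1) m'"
proof -
  let ?I = "\<lambda>d m. inv1 (n + 1 - d) m \<and> d \<le> n"
  have "?I n m \<Longrightarrow> \<exists>k m'. k \<le> n * 8 + 2 \<and> run prog k (4, m) = (13, m') \<and> inv1 (n+1) m'"
  proof (rule loop_rule[where I = ?I])
    fix d m assume h: "?I (Suc d) m"
    have iv: "inv1 (n - d) m" and i: "1 \<le> n - d" "n - d \<le> n" using h by auto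
    from body1[OF iv i] have "\<exists>m'. run prog 8 (4, m) = (4, m') \<and> inv1 (n + 1 - d) m'"
      using h by (simp add: Suc_diff_le)
    then show "(\<exists>k m'. k \<le> 8 \<and> run prog k (4, m) = (4, m') \<and> ?I d m') \<or>
        (\<exists>k m'. k \<le> 2 \<and> run prog k (4, m) = (13, m') \<and> inv1 (n+1) m')"
      using h by auto
  next
    fix m assume h: "?I 0 m"
    then have "m (-2) = int (n+1)" "m 0 = int n" unfolding inv1_def by auto
    from blk_h1b[OF this] h show "\<exists>k m'. k \<le> 2 \<and> run prog k (4, m) = (13, m') \<and> inv1 (n+1) m'" by auto
  qed
  then show ?thesis using assms by simp
qed


definition base :: "(int \<Rightarrow> int) \<Rightarrow> bool" where
  "base m \<longleftrightarrow> m 0 = int n \<and> m (-1) = 1 \<and> m (-13) = 0 \<and> m (-10) = 2 * int n \<and> m (-6) = int n + 1 \<and>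
     m (-11) = 3 * int n \<and> (\<forall>i\<in>{1..n}. m (int n + int i) = int (p i)) \<and>
     (\<forall>v\<in>{1..n}. m (2 * int n + int v) = int (s v))"

definition tab :: "nat \<Rightarrow> nat \<Rightarrow> (int \<Rightarrow> int) \<Rightarrow> bool" where
  "tab x y m \<longleftrightarrow> (\<forall>x'\<le>n. \<forall>y'\<le>n. (x' = 0 \<or> y' = 0 \<or> x' < x \<or> (x' = x \<and> y' < y)) \<longrightarrow>
      m (int (rbv n x') + int y') = int (F x' y'))"

definition rbi :: "nat \<Rightarrow> (int \<Rightarrow> int) \<Rightarrow> bool" where
  "rbi x m \<longleftrightarrow> (\<forall>x'\<le>x. m (3 * int n + 1 + int x') = int (rbv n x'))"

definition inv2 :: "nat \<Rightarrow> (int \<Rightarrow> int) \<Rightarrow> bool" where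
  "inv2 x m \<longleftrightarrow> base m \<and> rbi (x-1) m \<and> tab x 1 m \<and> m (-2) = int x \<and> m (-7) = int (rbv n (x-1))"

definition inv3 :: "nat \<Rightarrow> nat \<Rightarrow> (int \<Rightarrow> int) \<Rightarrow> bool" where
  "inv3 x y m \<longleftrightarrow> base m \<and> rbi x m \<and> tab x y m \<and> m (-2) = int x \<and> m (-3) = int y \<and>
     m (-7) = int (rbv n (x-1)) + (int n + 1)"

lemma base_frame:
  assumes "base m" "\<And>a. a \<le> 3 * int n \<Longrightarrow> a \<le> 0 \<or> a > int n \<Longrightarrow> a \<notin> {-2,-3,-4,-5,-7,-8,-9,-12,-14} \<Longrightarrow> m' a = m a"
  shows "base m'"
proof -
  have b: "m' 0 = m 0" "m' (-1) = m (-1)" "m' (-13) = m (-13)" "m' (-10) = m (-10)" "m' (-6) = m (-6)" "m' (-11) = m (-11)"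
    by (auto intro!: assms(2))
  have c: "\<forall>i\<in>{1..n}. m' (int n + int i) = m (int n + int i)" by (auto intro!: assms(2))
  have d: "\<forall>v\<in>{1..n}. m' (2 * int n + int v) = m (2 * int n + int v)" by (auto intro!: assms(2))
  show ?thesis using assms(1) b c d unfolding base_def by auto
qed

lemma phase2_start:
  assumes "inv1 (n+1) m"
  shows "\<exists>m'. run prog 9 (13, m) = (22, m') \<and> inv2 1 m'"
proof -
  have r: "m 0 = int n" "m (-1) = 1" "m (-10) = 2 * int n" using assms unfolding inv1_def by auto
  from blk_p2[OF r] obtain m' where m': "run prog 9 (13, m) = (22, m')" "m' (-6) = int n + 1" "m' (-11) = 3 * int n"
    "m' (-7) = 4 * int n + 2" "m' (3 * int n + 1) = 4 * int n + 2" "m' (-2) = 1"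
    "\<forall>a. a \<notin> {-4,-6,-11,-14,-7,-2} \<longrightarrow> a \<noteq> 3 * int n + 1 \<longrightarrow> m' a = m a" by blast
  have fr: "m' a = m a" if "a \<notin> {-4,-6,-11,-14,-7,-2}" "a \<noteq> 3 * int n + 1" for a using m'(7) that by blast
  have "base m'" unfolding base_def
  proof (intro conjI)
    show "m' 0 = int n" "m' (-1) = 1" "m' (-13) = 0" "m' (-10) = 2 * int n"
      using fr assms n1 unfolding inv1_def by auto
    show "m' (-6) = int n + 1" "m' (-11) = 3 * int n" using m' by auto
    show "\<forall>i\<in>{1..n}. m' (int n + int i) = int (p i)"
    proof
      fix i assume i: "i \<in> {1..n}"
      have "m' (int n + int i) = m (int n + int i)" using i by (intro fr) auto
      then show "m' (int n + int i) = int (p i)" using assms i unfolding inv1_def by auto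
    qed
    show "\<forall>v\<in>{1..n}. m' (2 * int n + int v) = int (s v)"
    proof
      fix v assume v: "v \<in> {1..n}"
      have "m' (2 * int n + int v) = m (2 * int n + int v)" using v by (intro fr) auto
      moreover have "s v \<in> {1..n}" using sr v by auto
      ultimately show "m' (2 * int n + int v) = int (s v)" using assms unfolding inv1_def
        by (metis Suc_eq_plus1 atLeastAtMost_iff le_imp_less_Suc ps)
    qed
  qed
  moreover have "rbi 0 m'" unfolding rbi_def rbv_def using m'(5) by simp
  moreover have "tab 1 1 m'" unfolding tab_def
  proof (intro allI impI)
    fix x' y' assume h: "x' \<le> n" "y' \<le> n" "x' = 0 \<or> y' = 0 \<or> x' < 1 \<or> x' = 1 \<and> y' < 1"
    then have z: "F x' y' = 0" by auto
    have ge: "int (rbv n x') + int y' > 3 * int n + 1" using rbv_ge[of n x'] n1 by linarith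
    then have "m' (int (rbv n x') + int y') = m (int (rbv n x') + int y')" by (intro fr) auto
    also have "\<dots> = 0" using assms ge unfolding inv1_def by auto
    finally show "m' (int (rbv n x') + int y') = int (F x' y')" using z by simp
  qed
  moreover have "m' (-2) = int 1" "m' (-7) = int (rbv n (1-1))" using m' unfolding rbv_def by auto
  ultimately show ?thesis unfolding inv2_def using m'(1) by auto
qed


lemma tabD: "tab x y m \<Longrightarrow> x' \<le> n \<Longrightarrow> y' \<le> n \<Longrightarrow> (x' = 0 \<or> y' = 0 \<or> x' < x \<or> (x' = x \<and> y' < y)) \<Longrightarrow>
  m (int (rbv n x') + int y') = int (F x' y')"
  unfolding tab_def by blast

lemma inner_body:
  assumes inv: "inv3 x y m" and x: "1 \<le> x" "x \<le> n" and y: "1 \<le> y" "y \<le> n"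
  shows "\<exists>k m'. k \<le> 27 \<and> run prog k (29, m) = (29, m') \<and> inv3 x (y+1) m'"
proof -
  define R where "R = rbv n (x-1)"
  have B: "base m" and RB: "rbi x m" and TB: "tab x y m" and rI: "m (-2) = int x" and rJ: "m (-3) = int y"
    and rRB: "m (-7) = int R + (int n + 1)" using inv unfolding inv3_def R_def by auto
  have r: "m (-1) = 1" "m (-6) = int n + 1" "m 0 = int n" "m (-10) = 2 * int n" "m (-11) = 3 * int n"
    using B unfolding base_def by auto
  have Rx: "int (rbv n x) = int R + (int n + 1)" unfolding R_def using rbv_prev[OF x(1)] by simp
  have u: "m (int R + int y) = int (F (x-1) y)" using TB x y unfolding tab_def R_def by auto
  have l: "m (int R + (int n + 1) + int y - 1) = int (F x (y-1))"
  proof -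
    have "m (int (rbv n x) + int (y-1)) = int (F x (y-1))" by (rule tabD[OF TB]) (use x y in auto)
    moreover have "int (rbv n x) + int (y-1) = int R + (int n + 1) + int y - 1" using Rx y by simp
    ultimately show ?thesis by simp
  qed
  have sg: "m (2 * int n + int y) = int (s y)" using B y unfolding base_def by auto
  have px: "m (int n + int x) = int (p x)" using B x unfolding base_def by auto
  have sy: "s y \<in> {1..n}" using sr y by auto
  have pxr: "p x \<in> {1..n}" using pr x by auto
  have rbs: "m (3 * int n + int (s y)) = int (rbv n (s y - 1))" if "s y < x" "p x < y"
  proof -
    have "m (3 * int n + 1 + int (s y - 1)) = int (rbv n (s y - 1))" using RB that unfolding rbi_def by auto
    moreover have "3 * int n + 1 + int (s y - 1) = 3 * int n + int (s y)" using sy by auto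
    ultimately show ?thesis by simp
  qed
  have dg: "m (int (rbv n (s y - 1)) + int (p x) - 1) = int (F (s y - 1) (p x - 1))" if "s y < x" "p x < y"
  proof -
    have "m (int (rbv n (s y - 1)) + int (p x - 1)) = int (F (s y - 1) (p x - 1))"
      by (rule tabD[OF TB]) (use that sy pxr x in auto)
    moreover have "int (rbv n (s y - 1)) + int (p x - 1) = int (rbv n (s y - 1)) + int (p x) - 1" using pxr by auto
    ultimately show ?thesis by metis
  qed
  from blk_inner[OF r(1) rI rJ r(2) rRB r(3) r(4) r(5) u l sg px rbs dg]
  obtain k m' where m': "k \<le> 26" "run prog k (32, m) = (29, m')" "m' (-3) = int y + 1"
    "m' (int R + (int n + 1) + int y) = int (max (max (F (x-1) y) (F x (y-1))) (if s y < x \<and> p x < y then Suc (F (s y - 1) (p x - 1)) else 0))"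
    "\<forall>a. a \<notin> {-3,-4,-5,-8,-12} \<longrightarrow> a \<noteq> int R + (int n + 1) + int y \<longrightarrow> m' a = m a" by blast
  have val: "m' (int (rbv n x) + int y) = int (F x y)" using m'(4) Rx Ft_rec[OF x(1) y(1), of p s] by simp
  have fr: "m' a = m a" if "a \<notin> {-3,-4,-5,-8,-12}" "a \<noteq> int (rbv n x) + int y" for a
    using m'(5) that Rx by auto
  have run: "run prog (1 + k) (29, m) = (29, m')"
    using run_seq[OF blk_h3a[OF rJ r(3) y(2)] m'(2)] .
  have big: "int (rbv n x) + int y > 4 * int n + 1" using rbv_ge[of n x] by linarith
  have "base m'" using B by (rule base_frame) (use big in \<open>intro fr, auto\<close>)
  moreover have "rbi x m'" unfolding rbi_def
  proof (intro allI impI)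
    fix x' assume "x' \<le> x"
    then have "m' (3 * int n + 1 + int x') = m (3 * int n + 1 + int x')" using big x by (intro fr) auto
    then show "m' (3 * int n + 1 + int x') = int (rbv n x')" using RB \<open>x' \<le> x\<close> unfolding rbi_def by auto
  qed
  moreover have "tab x (y+1) m'" unfolding tab_def
  proof (intro allI impI)
    fix x' y' assume h: "x' \<le> n" "y' \<le> n" "x' = 0 \<or> y' = 0 \<or> x' < x \<or> x' = x \<and> y' < y + 1"
    show "m' (int (rbv n x') + int y') = int (F x' y')"
    proof (cases "x' = x \<and> y' = y")
      case True then show ?thesis using val by simp
    next
      case False
      have ne: "int (rbv n x') + int y' \<noteq> int (rbv n x) + int y"
      proof
        assume "int (rbv n x') + int y' = int (rbv n x) + int y"
        then have "rbv n x' + y' = rbv n x + y" by linarith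
        then show False using rbv_inj[OF h(2) y(2)] False by blast
      qed
      have "int (rbv n x') + int y' > 0" using rbv_ge[of n x'] by linarith
      then have "m' (int (rbv n x') + int y') = m (int (rbv n x') + int y')" using ne by (intro fr) auto
      moreover have "x' = 0 \<or> y' = 0 \<or> x' < x \<or> x' = x \<and> y' < y" using h(3) False by auto
      ultimately show ?thesis using tabD[OF TB h(1,2)] by auto
    qed
  qed
  moreover have "m' (-2) = int x" "m' (-7) = int (rbv n (x-1)) + (int n + 1)"
    using fr rI rRB big R_def by auto
  moreover have "m' (-3) = int (y+1)" using m'(3) by simp
  ultimately have "inv3 x (y+1) m'" unfolding inv3_def by auto
  then show ?thesis using run m'(1) by (intro exI[of _ "1+k"] exI[of _ m']) auto
qed

lemma inner_loop:
  assumes inv: "inv3 x 1 m" and x: "1 \<le> x" "x \<le> n"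
  shows "\<exists>k m'. k \<le> n * 27 + 3 \<and> run prog k (29, m) = (22, m') \<and> inv2 (x+1) m'"
proof -
  let ?I = "\<lambda>d m. inv3 x (n + 1 - d) m \<and> d \<le> n"
  have "?I n m \<Longrightarrow> \<exists>k m'. k \<le> n * 27 + 3 \<and> run prog k (29, m) = (22, m') \<and> inv2 (x+1) m'"
  proof (rule loop_rule[where I = ?I])
    fix d m assume h: "?I (Suc d) m"
    have iv: "inv3 x (n - d) m" and y: "1 \<le> n - d" "n - d \<le> n" using h by auto
    from inner_body[OF iv x y] have "\<exists>k m'. k \<le> 27 \<and> run prog k (29, m) = (29, m') \<and> inv3 x (n + 1 - d) m'"
      using h by (simp add: Suc_diff_le)
    then show "(\<exists>k m'. k \<le> 27 \<and> run prog k (29, m) = (29, m') \<and> ?I d m') \<or>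
        (\<exists>k m'. k \<le> 3 \<and> run prog k (29, m) = (22, m') \<and> inv2 (x+1) m')"
      using h by auto
  next
    fix m assume h: "?I 0 m"
    then have iv: "inv3 x (n+1) m" by simp
    then have B: "base m" and RB: "rbi x m" and TB: "tab x (n+1) m" and rI: "m (-2) = int x" and rJ: "m (-3) = int (n+1)"
      and rRB: "m (-7) = int (rbv n (x-1)) + (int n + 1)" unfolding inv3_def by auto
    have r: "m (-1) = 1" "m 0 = int n" using B unfolding base_def by auto
    from blk_h3b[OF rJ r(2) r(1) rI] obtain m' where m': "run prog 3 (29, m) = (22, m')" "m' (-2) = int x + 1"
      "\<forall>a. a \<noteq> -2 \<longrightarrow> m' a = m a" by auto
    have fr: "m' a = m a" if "a \<noteq> -2" for a using m'(3) that by blast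
    have "base m'" using B by (rule base_frame) (intro fr, auto)
    moreover have "rbi (x + 1 - 1) m'" using RB fr unfolding rbi_def by auto
    moreover have "tab (x+1) 1 m'" unfolding tab_def
    proof (intro allI impI)
      fix x' y' assume hh: "x' \<le> n" "y' \<le> n" "x' = 0 \<or> y' = 0 \<or> x' < x + 1 \<or> x' = x + 1 \<and> y' < 1"
      have "int (rbv n x') + int y' \<noteq> -2" using rbv_ge[of n x'] by linarith
      then have "m' (int (rbv n x') + int y') = m (int (rbv n x') + int y')" by (rule fr)
      moreover have "x' = 0 \<or> y' = 0 \<or> x' < x \<or> x' = x \<and> y' < n + 1" using hh by auto
      ultimately show "m' (int (rbv n x') + int y') = int (F x' y')" using tabD[OF TB hh(1,2)] by auto
    qed
    moreover have "m' (-2) = int (x+1)" using m'(2) by simp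
    moreover have "m' (-7) = int (rbv n (x + 1 - 1))" using fr rRB rbv_prev[OF x(1)] by simp
    ultimately have "inv2 (x+1) m'" unfolding inv2_def by auto
    then show "\<exists>k m'. k \<le> 3 \<and> run prog k (29, m) = (22, m') \<and> inv2 (x+1) m'" using m'(1) by auto
  qed
  then show ?thesis using inv by simp
qed

lemma outer_body:
  assumes inv: "inv2 x m" and x: "1 \<le> x" "x \<le> n"
  shows "\<exists>k m'. k \<le> n * 27 + 9 \<and> run prog k (22, m) = (22, m') \<and> inv2 (x+1) m'"
proof -
  have B: "base m" and RB: "rbi (x-1) m" and TB: "tab x 1 m" and rI: "m (-2) = int x"
    and rRB: "m (-7) = int (rbv n (x-1))" using inv unfolding inv2_def by auto
  have r: "m (-1) = 1" "m (-6) = int n + 1" "m 0 = int n" "m (-11) = 3 * int n"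
    using B unfolding base_def by auto
  from blk_row[OF rI r(1) r(4) rRB r(2)] obtain m' where m': "run prog 5 (24, m) = (29, m')"
    "m' (-7) = int (rbv n (x-1)) + (int n + 1)" "m' (3 * int n + 1 + int x) = int (rbv n (x-1)) + (int n + 1)"
    "m' (-3) = 1" "\<forall>a. a \<notin> {-7,-4,-3} \<longrightarrow> a \<noteq> 3 * int n + 1 + int x \<longrightarrow> m' a = m a" by blast
  have fr: "m' a = m a" if "a \<notin> {-7,-4,-3}" "a \<noteq> 3 * int n + 1 + int x" for a using m'(5) that by blast
  have run1: "run prog 6 (22, m) = (29, m')" using run_seq[OF blk_h2a[OF rI r(3) x(2)] m'(1)] by simp
  have "base m'" using B by (rule base_frame) (use x in \<open>intro fr, auto\<close>)
  moreover have "rbi x m'" unfolding rbi_def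
  proof (intro allI impI)
    fix x' assume h: "x' \<le> x"
    show "m' (3 * int n + 1 + int x') = int (rbv n x')"
    proof (cases "x' = x")
      case True then show ?thesis using m'(3) rbv_prev[OF x(1)] by simp
    next
      case False
      then have "m' (3 * int n + 1 + int x') = m (3 * int n + 1 + int x')" by (intro fr) auto
      then show ?thesis using RB h False unfolding rbi_def by auto
    qed
  qed
  moreover have "tab x 1 m'" unfolding tab_def
  proof (intro allI impI)
    fix x' y' assume hh: "x' \<le> n" "y' \<le> n" "x' = 0 \<or> y' = 0 \<or> x' < x \<or> x' = x \<and> y' < 1"
    have "int (rbv n x') + int y' > 3 * int n + 1 + int x" using rbv_ge[of n x'] x by linarith
    then have "m' (int (rbv n x') + int y') = m (int (rbv n x') + int y')" by (intro fr) auto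
    then show "m' (int (rbv n x') + int y') = int (F x' y')" using tabD[OF TB hh(1,2,3)] by auto
  qed
  moreover have "m' (-2) = int x" using fr rI x by auto
  ultimately have "inv3 x 1 m'" unfolding inv3_def using m'(2,4) by auto
  from inner_loop[OF this x] obtain k m2 where "k \<le> n * 27 + 3" "run prog k (29, m') = (22, m2)" "inv2 (x+1) m2"
    by blast
  then show ?thesis using run_seq[OF run1] by (intro exI[of _ "6 + k"] exI[of _ m2]) auto
qed

lemma outer_loop:
  assumes inv: "inv2 1 m"
  shows "\<exists>k m'. k \<le> n * (n * 27 + 9) + 2 \<and> run prog k (22, m) = (58, m') \<and> inv2 (n+1) m'"
proof -
  let ?I = "\<lambda>d m. inv2 (n + 1 - d) m \<and> d \<le> n"
  have "?I n m \<Longrightarrow> \<exists>k m'. k \<le> n * (n * 27 + 9) + 2 \<and> run prog k (22, m) = (58, m') \<and> inv2 (n+1) m'"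
  proof (rule loop_rule[where I = ?I])
    fix d m assume h: "?I (Suc d) m"
    have iv: "inv2 (n - d) m" and x: "1 \<le> n - d" "n - d \<le> n" using h by auto
    from outer_body[OF iv x] have "\<exists>k m'. k \<le> n * 27 + 9 \<and> run prog k (22, m) = (22, m') \<and> inv2 (n + 1 - d) m'"
      using h by (simp add: Suc_diff_le)
    then show "(\<exists>k m'. k \<le> n * 27 + 9 \<and> run prog k (22, m) = (22, m') \<and> ?I d m') \<or>
        (\<exists>k m'. k \<le> 2 \<and> run prog k (22, m) = (58, m') \<and> inv2 (n+1) m')"
      using h by auto
  next
    fix m assume h: "?I 0 m"
    then have iv: "inv2 (n+1) m" by simp
    then have "m (-2) = int (n+1)" "m 0 = int n" "m (-1) = 1" unfolding inv2_def base_def by auto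
    from blk_h2b[OF this] iv show "\<exists>k m'. k \<le> 2 \<and> run prog k (22, m) = (58, m') \<and> inv2 (n+1) m'" by auto
  qed
  then show ?thesis using inv by simp
qed

definition inv4 :: "nat \<Rightarrow> nat \<Rightarrow> nat \<Rightarrow> (int \<Rightarrow> int) \<Rightarrow> bool" where
  "inv4 x y c m \<longleftrightarrow> base m \<and> rbi n m \<and> tab (n+1) 1 m \<and> m (-2) = int x \<and> m (-3) = int y \<and> m (-9) = int c \<and>
     x \<le> n \<and> y \<le> n \<and> c \<le> length (T n n) \<and> drop c (T n n) = T x y \<and>
     (\<forall>j<c. m (2 * int j + 1) = int (fst (T n n ! j)) \<and> m (2 * int j + 2) = int (snd (T n n ! j)))"

definition fin :: "(int \<Rightarrow> int) \<Rightarrow> bool" where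
  "fin m \<longleftrightarrow> m 0 = int (length (T n n)) \<and>
     (\<forall>j<length (T n n). m (2 * int j + 1) = int (fst (T n n ! j)) \<and> m (2 * int j + 2) = int (snd (T n n ! j)))"

lemma phase3_start:
  assumes "inv2 (n+1) m"
  shows "\<exists>m'. run prog 3 (58, m) = (61, m') \<and> inv4 n n 0 m'"
proof -
  have B: "base m" and RB: "rbi n m" and TB: "tab (n+1) 1 m" using assms unfolding inv2_def by auto
  have "m 0 = int n" using B unfolding base_def by auto
  from blk_p3[where m=m and n=n, OF this] obtain m' where m': "run prog 3 (58, m) = (61, m')" "m' (-2) = int n" "m' (-3) = int n"
    "m' (-9) = 0" "\<forall>a. a \<notin> {-2,-3,-9} \<longrightarrow> m' a = m a" by blast
  have fr: "m' a = m a" if "a \<notin> {-2,-3,-9}" for a using m'(5) that by blast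
  have "base m'" using B by (rule base_frame) (intro fr, auto)
  moreover have "rbi n m'" using RB fr unfolding rbi_def by auto
  moreover have "tab (n+1) 1 m'" unfolding tab_def
  proof (intro allI impI)
    fix x' y' assume hh: "x' \<le> n" "y' \<le> n" "x' = 0 \<or> y' = 0 \<or> x' < n + 1 \<or> x' = n + 1 \<and> y' < 1"
    have "int (rbv n x') + int y' \<notin> {-2,-3,-9}" using rbv_ge[of n x'] by auto
    then have "m' (int (rbv n x') + int y') = m (int (rbv n x') + int y')" by (rule fr)
    then show "m' (int (rbv n x') + int y') = int (F x' y')" using tabD[OF TB hh(1,2,3)] by auto
  qed
  ultimately have "inv4 n n 0 m'" unfolding inv4_def using m' by auto
  then show ?thesis using m'(1) by blast
qed

lemma F_half: "2 * F x y \<le> x"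
  by (rule Ft_half) (use s1 in auto)

lemma tb_body:
  assumes inv: "inv4 x y c m" and x0: "x \<noteq> 0" and y0: "y \<noteq> 0"
  shows "\<exists>k m'. k \<le> 26 \<and> run prog k (61, m) = (61, m') \<and> (\<exists>x' y' c'. inv4 x' y' c' m' \<and> x' + y' < x + y)"
proof -
  define R where "R = rbv n (x-1)"
  have B: "base m" and RB: "rbi n m" and TB: "tab (n+1) 1 m" and rI: "m (-2) = int x" and rJ: "m (-3) = int y"
    and rC: "m (-9) = int c" and x: "1 \<le> x" "x \<le> n" and y: "1 \<le> y" "y \<le> n" and cl: "c \<le> length (T n n)"
    and dr: "drop c (T n n) = T x y"
    and outs: "\<forall>j<c. m (2 * int j + 1) = int (fst (T n n ! j)) \<and> m (2 * int j + 2) = int (snd (T n n ! j))"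
    using inv x0 y0 unfolding inv4_def by auto
  have r: "m (-1) = 1" "m (-6) = int n + 1" "m 0 = int n" "m (-10) = 2 * int n" "m (-11) = 3 * int n" "m (-13) = 0"
    using B unfolding base_def by auto
  have Rx: "int (rbv n x) = int R + (int n + 1)" unfolding R_def using rbv_prev[OF x(1)] by simp
  have rb: "m (3 * int n + 1 + int x) = int R + (int n + 1)" using RB x Rx unfolding rbi_def by auto
  have v: "m (int R + (int n + 1) + int y) = int (F x y)"
    using tabD[OF TB x(2) y(2)] x Rx by simp
  have u: "m (int R + int y) = int (F (x-1) y)"
    using tabD[OF TB _ y(2), of "x-1"] x unfolding R_def by simp
  have l: "m (int R + (int n + 1) + int y - 1) = int (F x (y-1))"
  proof -
    have "m (int (rbv n x) + int (y-1)) = int (F x (y-1))" by (rule tabD[OF TB]) (use x y in auto)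
    moreover have "int (rbv n x) + int (y-1) = int R + (int n + 1) + int y - 1" using Rx y by simp
    ultimately show ?thesis by simp
  qed
  have sg: "m (2 * int n + int y) = int (s y)" using B y unfolding base_def by auto
  have px: "m (int n + int x) = int (p x)" using B x unfolding base_def by auto
  have sy: "s y \<in> {1..n}" using sr y by auto
  have pxr: "p x \<in> {1..n}" using pr x by auto
  note BT = blk_tb[OF r(1) rI rJ r(2) r(3) r(4) r(5) rC rb v u l sg px]
  have h4: "run prog 2 (61, m) = (63, m)" using blk_h4c[OF rI rJ r(6) x0 y0] .
  have big: "int (rbv n x') + int y' > 4 * int n + 1" for x' y' using rbv_ge[of n x'] by linarith
  consider (dx) "F x y \<le> F (x-1) y" | (dy) "\<not> F x y \<le> F (x-1) y" "F x y \<le> F x (y-1)"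
    | (bx) "\<not> F x y \<le> F (x-1) y" "\<not> F x y \<le> F x (y-1)" by linarith
  then show ?thesis
  proof cases
    case dx
    from BT dx obtain m' where m': "run prog 10 (63, m) = (61, m')" "m' (-2) = int x - 1"
      "\<forall>a. a \<notin> {-2,-4,-5,-7,-8} \<longrightarrow> m' a = m a" by blast
    have fr: "m' a = m a" if "a \<notin> {-2,-4,-5,-7,-8}" for a using m'(3) that by blast
    have T: "T x y = T (x-1) y" using dx x0 y0 by (simp add: Tr.simps[of p s x y])
    have "inv4 (x-1) y c m'" unfolding inv4_def
    proof (intro conjI)
      show "base m'" using B by (rule base_frame) (intro fr, auto)
      show "rbi n m'" using RB fr unfolding rbi_def by auto
      show "tab (n+1) 1 m'" unfolding tab_def
      proof (intro allI impI)
        fix x' y' assume hh: "x' \<le> n" "y' \<le> n" "x' = 0 \<or> y' = 0 \<or> x' < n + 1 \<or> x' = n + 1 \<and> y' < 1"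
        have "int (rbv n x') + int y' \<notin> {-2,-4,-5,-7,-8}" using big[of x' y'] by auto
        then have "m' (int (rbv n x') + int y') = m (int (rbv n x') + int y')" by (rule fr)
        then show "m' (int (rbv n x') + int y') = int (F x' y')" using tabD[OF TB hh(1,2,3)] by auto
      qed
      show "m' (-2) = int (x-1)" using m'(2) x by simp
      show "m' (-3) = int y" "m' (-9) = int c" using fr rJ rC by auto
      show "\<forall>j<c. m' (2 * int j + 1) = int (fst (T n n ! j)) \<and> m' (2 * int j + 2) = int (snd (T n n ! j))"
      proof (intro allI impI)
        fix j assume "j < c"
        have "m' (2 * int j + 1) = m (2 * int j + 1)" "m' (2 * int j + 2) = m (2 * int j + 2)" by (intro fr; auto)+
        then show "m' (2 * int j + 1) = int (fst (T n n ! j)) \<and> m' (2 * int j + 2) = int (snd (T n n ! j))"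
          using outs \<open>j < c\<close> by auto
      qed
    qed (use x y cl dr T in auto)
    moreover have "x - 1 + y < x + y" using x by simp
    ultimately have E: "\<exists>x' y' c'. inv4 x' y' c' m' \<and> x' + y' < x + y" by blast
    then show ?thesis using run_seq[OF h4 m'(1)] by (intro exI[of _ 12] exI[of _ m']) simp
  next
    case dy
    from BT dy obtain m' where m': "run prog 14 (63, m) = (61, m')" "m' (-3) = int y - 1"
      "\<forall>a. a \<notin> {-3,-4,-5,-7,-8} \<longrightarrow> m' a = m a" by blast
    have fr: "m' a = m a" if "a \<notin> {-3,-4,-5,-7,-8}" for a using m'(3) that by blast
    have T: "T x y = T x (y-1)" using dy x0 y0 by (simp add: Tr.simps[of p s x y])
    have "inv4 x (y-1) c m'" unfolding inv4_def
    proof (intro conjI)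
      show "base m'" using B by (rule base_frame) (intro fr, auto)
      show "rbi n m'" using RB fr unfolding rbi_def by auto
      show "tab (n+1) 1 m'" unfolding tab_def
      proof (intro allI impI)
        fix x' y' assume hh: "x' \<le> n" "y' \<le> n" "x' = 0 \<or> y' = 0 \<or> x' < n + 1 \<or> x' = n + 1 \<and> y' < 1"
        have "int (rbv n x') + int y' \<notin> {-3,-4,-5,-7,-8}" using big[of x' y'] by auto
        then have "m' (int (rbv n x') + int y') = m (int (rbv n x') + int y')" by (rule fr)
        then show "m' (int (rbv n x') + int y') = int (F x' y')" using tabD[OF TB hh(1,2,3)] by auto
      qed
      show "m' (-3) = int (y-1)" using m'(2) y by simp
      show "m' (-2) = int x" "m' (-9) = int c" using fr rI rC by auto
      show "\<forall>j<c. m' (2 * int j + 1) = int (fst (T n n ! j)) \<and> m' (2 * int j + 2) = int (snd (T n n ! j))"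
      proof (intro allI impI)
        fix j assume "j < c"
        have "m' (2 * int j + 1) = m (2 * int j + 1)" "m' (2 * int j + 2) = m (2 * int j + 2)" by (intro fr; auto)+
        then show "m' (2 * int j + 1) = int (fst (T n n ! j)) \<and> m' (2 * int j + 2) = int (snd (T n n ! j))"
          using outs \<open>j < c\<close> by auto
      qed
    qed (use x y cl dr T in auto)
    moreover have "x + (y - 1) < x + y" using y by simp
    ultimately have E: "\<exists>x' y' c'. inv4 x' y' c' m' \<and> x' + y' < x + y" by blast
    then show ?thesis using run_seq[OF h4 m'(1)] by (intro exI[of _ 16] exI[of _ m']) simp
  next
    case bx
    from BT bx obtain m' where m': "run prog 24 (63, m) = (61, m')" "m' (-2) = int (s y) - 1"
      "m' (-3) = int (p x) - 1" "m' (-9) = int c + 1" "m' (2 * int c + 1) = int y" "m' (2 * int c + 2) = int (p x)"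
      "\<forall>a. a \<notin> {-2,-3,-4,-5,-7,-8,-9,-12} \<longrightarrow> a \<noteq> 2 * int c + 1 \<longrightarrow> a \<noteq> 2 * int c + 2 \<longrightarrow> m' a = m a" by blast
    have fr: "m' a = m a" if "a \<notin> {-2,-3,-4,-5,-7,-8,-9,-12}" "a \<noteq> 2 * int c + 1" "a \<noteq> 2 * int c + 2" for a
      using m'(7) that by blast
    have top: "s y < x \<and> p x < y \<and> F x y = Suc (F (s y - 1) (p x - 1))"
      using Ft_top[OF x(1) y(1) bx] .
    have T: "T x y = (y, p x) # T (s y - 1) (p x - 1)" using bx top x0 y0 by (simp add: Tr.simps[of p s x y])
    have clt: "c < length (T n n)" using dr T cl by (metis drop_all leI list.distinct(1))
    have nth: "T n n ! c = (y, p x)" and dr': "drop (Suc c) (T n n) = T (s y - 1) (p x - 1)"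
      using Cons_nth_drop_Suc[OF clt] dr T by auto
    have "2 * length (T n n) \<le> n" using F_half[of n n] Tr_len by simp
    then have cn: "2 * int c + 2 \<le> int n" using clt by linarith
    have "inv4 (s y - 1) (p x - 1) (c+1) m'" unfolding inv4_def
    proof (intro conjI)
      show "base m'" using B by (rule base_frame) (use cn in \<open>intro fr, auto\<close>)
      show "rbi n m'" unfolding rbi_def
      proof (intro allI impI)
        fix x' assume "x' \<le> n"
        have "m' (3 * int n + 1 + int x') = m (3 * int n + 1 + int x')" using cn by (intro fr) auto
        then show "m' (3 * int n + 1 + int x') = int (rbv n x')" using RB \<open>x' \<le> n\<close> unfolding rbi_def by auto
      qed
      show "tab (n+1) 1 m'" unfolding tab_def
      proof (intro allI impI)
        fix x' y' assume hh: "x' \<le> n" "y' \<le> n" "x' = 0 \<or> y' = 0 \<or> x' < n + 1 \<or> x' = n + 1 \<and> y' < 1"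
        have "m' (int (rbv n x') + int y') = m (int (rbv n x') + int y')" using big[of x' y'] cn by (intro fr) auto
        then show "m' (int (rbv n x') + int y') = int (F x' y')" using tabD[OF TB hh(1,2,3)] by auto
      qed
      show "m' (-2) = int (s y - 1)" using m'(2) sy by simp
      show "m' (-3) = int (p x - 1)" using m'(3) pxr by simp
      show "m' (-9) = int (c + 1)" using m'(4) by simp
      show "c + 1 \<le> length (T n n)" using clt by simp
      show "drop (c+1) (T n n) = T (s y - 1) (p x - 1)" using dr' by simp
      show "\<forall>j<c+1. m' (2 * int j + 1) = int (fst (T n n ! j)) \<and> m' (2 * int j + 2) = int (snd (T n n ! j))"
      proof (intro allI impI)
        fix j assume j: "j < c + 1"
        show "m' (2 * int j + 1) = int (fst (T n n ! j)) \<and> m' (2 * int j + 2) = int (snd (T n n ! j))"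
        proof (cases "j = c")
          case True then show ?thesis using m'(5,6) nth by simp
        next
          case False
          then have "j < c" using j by simp
          have "m' (2 * int j + 1) = m (2 * int j + 1)" "m' (2 * int j + 2) = m (2 * int j + 2)"
            using \<open>j < c\<close> by (intro fr; auto)+
          then show ?thesis using outs \<open>j < c\<close> by auto
        qed
      qed
    qed (use sy pxr in auto)
    moreover have "(s y - 1) + (p x - 1) < x + y" using top by arith
    ultimately have E: "\<exists>x' y' c'. inv4 x' y' c' m' \<and> x' + y' < x + y" by blast
    then show ?thesis using run_seq[OF h4 m'(1)] by (intro exI[of _ 26] exI[of _ m']) simp
  qed
qed

lemma tb_exit:
  assumes inv: "inv4 x y c m" and xy: "x = 0 \<or> y = 0"
  shows "\<exists>k m'. k \<le> 3 \<and> run prog k (61, m) = (92, m') \<and> fin m'"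
proof -
  have B: "base m" and rI: "m (-2) = int x" and rJ: "m (-3) = int y" and rC: "m (-9) = int c"
    and cl: "c \<le> length (T n n)" and dr: "drop c (T n n) = T x y"
    and outs: "\<forall>j<c. m (2 * int j + 1) = int (fst (T n n ! j)) \<and> m (2 * int j + 2) = int (snd (T n n ! j))"
    using inv unfolding inv4_def by auto
  have r13: "m (-13) = 0" using B unfolding base_def by auto
  have "T x y = []" using xy by (simp add: Tr.simps[of p s x y])
  then have cL: "c = length (T n n)" using dr cl by simp
  have h: "\<exists>k. k \<le> 2 \<and> run prog k (61, m) = (91, m)"
  proof (cases "x = 0")
    case True then show ?thesis using blk_h4a[OF rI r13] by (intro exI[of _ 1]) auto
  next
    case False then show ?thesis using blk_h4b[OF rI rJ r13] xy by (intro exI[of _ 2]) auto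
  qed
  then obtain k where k: "k \<le> 2" "run prog k (61, m) = (91, m)" by blast
  obtain m' where m': "run prog 1 (91, m) = (92, m')" "m' 0 = m (-9)" "\<forall>a. a \<noteq> 0 \<longrightarrow> m' a = m a"
    using blk_end by blast
  have "fin m'" unfolding fin_def
  proof (rule conjI)
    show "m' 0 = int (length (T n n))" using m'(2) rC cL by simp
  next
    show "\<forall>j<length (T n n). m' (2 * int j + 1) = int (fst (T n n ! j)) \<and> m' (2 * int j + 2) = int (snd (T n n ! j))"
    proof (intro allI impI)
    fix j assume "j < length (T n n)"
    then show "m' (2 * int j + 1) = int (fst (T n n ! j)) \<and> m' (2 * int j + 2) = int (snd (T n n ! j))"
      using outs m'(3) cL by auto
    qed
  qed
  then show ?thesis using run_seq[OF k(2) m'(1)] k(1) by (intro exI[of _ "k+1"] exI[of _ m']) auto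
qed

lemma tb_loop:
  assumes inv: "inv4 n n 0 m"
  shows "\<exists>k m'. k \<le> (2*n) * 26 + 3 \<and> run prog k (61, m) = (92, m') \<and> fin m'"
proof -
  let ?I = "\<lambda>d m. \<exists>x y c. inv4 x y c m \<and> x + y \<le> d"
  have "?I (2*n) m \<Longrightarrow> \<exists>k m'. k \<le> (2*n) * 26 + 3 \<and> run prog k (61, m) = (92, m') \<and> fin m'"
  proof (rule loop_rule[where I = ?I])
    fix d m assume "?I (Suc d) m"
    then obtain x y c where h: "inv4 x y c m" "x + y \<le> Suc d" by blast
    show "(\<exists>k m'. k \<le> 26 \<and> run prog k (61, m) = (61, m') \<and> ?I d m') \<or>
        (\<exists>k m'. k \<le> 3 \<and> run prog k (61, m) = (92, m') \<and> fin m')"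
    proof (cases "x = 0 \<or> y = 0")
      case True then show ?thesis using tb_exit[OF h(1)] by blast
    next
      case False
      then obtain k m' x' y' c' where kk: "k \<le> 26" "run prog k (61, m) = (61, m')" "inv4 x' y' c' m'" "x' + y' < x + y"
        using tb_body[OF h(1)] by blast
      have "x' + y' \<le> d" using kk(4) h(2) by linarith
      then show ?thesis using kk by blast
    qed
  next
    fix m assume "?I 0 m"
    then obtain x y c where h: "inv4 x y c m" "x + y \<le> 0" by blast
    then show "\<exists>k m'. k \<le> 3 \<and> run prog k (61, m) = (92, m') \<and> fin m'" using tb_exit[OF h(1)] by auto
  qed
  moreover have "?I (2*n) m" using inv by (intro exI[of _ n] exI[of _ n] exI[of _ 0]) simp
  ultimately show ?thesis by blast
qed

lemma whole:
  "\<exists>k m'. k \<le> 200 * n^2 \<and> run prog k (0, input_mem n p) = (92, m') \<and> fin m'"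
proof -
  obtain m1 where m1: "run prog 4 (0, input_mem n p) = (4, m1)" "inv1 1 m1" using phase1_start by blast
  obtain k2 m2 where m2: "k2 \<le> n * 8 + 2" "run prog k2 (4, m1) = (13, m2)" "inv1 (n+1) m2" using loop1[OF m1(2)] by blast
  obtain m3 where m3: "run prog 9 (13, m2) = (22, m3)" "inv2 1 m3" using phase2_start[OF m2(3)] by blast
  obtain k4 m4 where m4: "k4 \<le> n * (n * 27 + 9) + 2" "run prog k4 (22, m3) = (58, m4)" "inv2 (n+1) m4"
    using outer_loop[OF m3(2)] by blast
  obtain m5 where m5: "run prog 3 (58, m4) = (61, m5)" "inv4 n n 0 m5" using phase3_start[OF m4(3)] by blast
  obtain k6 m6 where m6: "k6 \<le> (2*n) * 26 + 3" "run prog k6 (61, m5) = (92, m6)" "fin m6"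
    using tb_loop[OF m5(2)] by blast
  have run: "run prog (4 + k2 + 9 + k4 + 3 + k6) (0, input_mem n p) = (92, m6)"
    using run_seq[OF run_seq[OF run_seq[OF run_seq[OF run_seq[OF m1(1) m2(2)] m3(1)] m4(2)] m5(1)] m6(2)] .
  have "4 + k2 + 9 + k4 + 3 + k6 \<le> 4 + (n*8+2) + 9 + (n * (n * 27 + 9) + 2) + 3 + ((2*n) * 26 + 3)"
    using m2(1) m4(1) m6(1) by linarith
  also have "\<dots> \<le> 200 * n^2"
  proof -
    obtain q where q: "n = Suc q" using n1 by (cases n) auto
    show ?thesis unfolding q by (simp add: algebra_simps power2_eq_square)
  qed
  finally show ?thesis using run m6(3) by blast
qed

lemma output_ok: "fin m \<Longrightarrow> output_edges m = Mout"
proof -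
  assume f: "fin m"
  have m0: "m 0 = int (length (T n n))" and outs: "\<forall>j<length (T n n). m (2 * int j + 1) = int (fst (T n n ! j)) \<and> m (2 * int j + 2) = int (snd (T n n ! j))"
    using f unfolding fin_def by auto
  show ?thesis
  proof
    show "output_edges m \<subseteq> Mout"
    proof
      fix e assume "e \<in> output_edges m"
      then obtain j where j: "e = {nat (m (2 * j - 1)), nat (m (2 * j))}" "1 \<le> j" "j \<le> m 0"
        unfolding output_edges_def by blast
      define i where "i = nat (j - 1)"
      have i: "i < length (T n n)" "j = int i + 1" using j m0 unfolding i_def by auto
      have e1: "2 * j - 1 = 2 * int i + 1" "2 * j = 2 * int i + 2" using i by auto
      have o: "m (2 * int i + 1) = int (fst (T n n ! i))" "m (2 * int i + 2) = int (snd (T n n ! i))"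
        using outs i by auto
      have a1: "m (2 * j - 1) = int (fst (T n n ! i))" using o(1) e1(1) by metis
      have a2: "m (2 * j) = int (snd (T n n ! i))" using o(2) e1(2) by metis
      have "nat (m (2 * j - 1)) = fst (T n n ! i)" "nat (m (2 * j)) = snd (T n n ! i)"
        using a1 a2 by simp_all
      then have "e = {fst (T n n ! i), snd (T n n ! i)}" using j(1) by simp
      moreover have "T n n ! i \<in> set (T n n)" using i by simp
      ultimately show "e \<in> Mout" unfolding Mout_def by (force simp: case_prod_beta)
    qed
  next
    show "Mout \<subseteq> output_edges m"
    proof
      fix e assume "e \<in> Mout"
      then obtain a b where ab: "(a,b) \<in> set (T n n)" "e = {a,b}" unfolding Mout_def by auto
      then obtain i where i: "i < length (T n n)" "T n n ! i = (a,b)" by (auto simp: in_set_conv_nth)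
      define j where "j = int i + 1"
      have e1: "2 * j - 1 = 2 * int i + 1" "2 * j = 2 * int i + 2" unfolding j_def by auto
      have o: "m (2 * int i + 1) = int (fst (T n n ! i))" "m (2 * int i + 2) = int (snd (T n n ! i))"
        using outs i by auto
      have a1: "m (2 * j - 1) = int (fst (T n n ! i))" using o(1) e1(1) by metis
      have a2: "m (2 * j) = int (snd (T n n ! i))" using o(2) e1(2) by metis
      have "nat (m (2 * j - 1)) = a" "nat (m (2 * j)) = b"
        using a1 a2 i(2) by simp_all
      then have "e = {nat (m (2 * j - 1)), nat (m (2 * j))}" using ab(2) by simp
      moreover have "1 \<le> j" "j \<le> m 0" using i m0 unfolding j_def by auto
      ultimately show "e \<in> output_edges m" unfolding output_edges_def by blast
    qed
  qed
qed

end


theorem theorem1: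
  shows "\<exists>(P :: instr list) (c :: nat). \<forall>n \<ge> 1. \<forall>\<pi>. \<pi> permutes {1..n} \<longrightarrow>
           (\<exists>k \<le> c * n ^ 2.
              halted P (run P k (0, input_mem n \<pi>)) \<and>
              maximum_induced_matching (perm_graph_edges n \<pi>)
                (output_edges (snd (run P k (0, input_mem n \<pi>)))))"
proof (rule exI[of _ prog], rule exI[of _ 200], intro allI impI)
  fix n :: nat and \<pi> :: "nat \<Rightarrow> nat"
  assume n: "1 \<le> n" and perm: "\<pi> permutes {1..n}"
  interpret pg1 n \<pi> by unfold_locales (use perm n in auto)
  obtain k m' where k: "k \<le> 200 * n^2" "run prog k (0, input_mem n \<pi>) = (92, m')" "fin m'"
    using whole by blast
  have "halted prog (run prog k (0, input_mem n \<pi>))" using k(2) halted_92 by simp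
  moreover have "maximum_induced_matching (perm_graph_edges n \<pi>) (output_edges (snd (run prog k (0, input_mem n \<pi>))))"
    using k(2) output_ok[OF k(3)] Mout_max by simp
  ultimately show "\<exists>k \<le> 200 * n ^ 2. halted prog (run prog k (0, input_mem n \<pi>)) \<and>
      maximum_induced_matching (perm_graph_edges n \<pi>) (output_edges (snd (run prog k (0, input_mem n \<pi>))))"
    using k(1) by blast
qed

end
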